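(* Let $V\subseteq\mathcal V$ be finite, $\mathcal E,\mathcal F\in\mathit{DProg}(V)$, and $V'\subseteq\mathcal V$ with $|V'|=|V|$ and $V\cap V'=\emptyset$. Then (1) $\mathcal E\le_T^e\mathcal F$ iff $\mathcal F\models_{tot}(\mathcal E^\dagger(\Omega_{V,V'}),\Omega_{V,V'})$; (2) $\mathcal E\le_P^e\mathcal F$ iff $\mathcal F\models_{par}(I-\mathcal E^\dagger(\Omega_{V,V'}),\,I-\Omega_{V,V'})$.
   Context: $\mathcal V$ is a countably infinite set of qubit variables; $\mathcal H_V=\bigotimes_{q\in V}\mathcal H_q$ for finite $V$. $\mathcal D(\mathcal H)$: partial density operators; $\mathcal P(\mathcal H)$: effects; $\mathit{DProg}(V)$: completely positive trace-nonincreasing super-operators on $\mathcal L(\mathcal H_V)$. $\mathcal E^\dagger$ is the adjoint of $\mathcal E$: ${\rm tr}(\mathcal E(A)B)={\rm tr}(A\mathcal E^\dagger(B))$ for all $A,B$. Operators/super-operators on subsystems are implicitly extended by tensoring with identities. With $d=2^{|V|}$ and orthonormal bases $\{|i\rangle_V\}$, $\{|i\rangle_{V'}\}$, $\Omega_{V,V'}=|\omega\rangle\langle\omega|$ where $|\omega\rangle=\frac1{\sqrt d}\sum_{i=0}^{d-1}|i\rangle_V|i\rangle_{V'}$, and $I$ is the identity on $\mathcal H_V\otimes\mathcal H_{V'}$. (In the paper's notation, $\mathcal E^\dagger(N)=wp.\mathcal E.N$ and $I-\mathcal E^\dagger(I-N)=wlp.\mathcal E.N$, so the specification in (2) is $(wlp.\mathcal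 E.(I-\Omega),I-\Omega)$.) For finite $W$ and $M,N\in\mathcal P(\mathcal H_W)$, $\mathcal E\models_{tot}(M,N)$ iff for all finite $X\supseteq V\cup W$ and $\rho\in\mathcal D(\mathcal H_X)$, ${\rm tr}(M\rho)\le{\rm tr}(N\mathcal E(\rho))$; $\mathcal E\models_{par}(M,N)$ iff for all such $X,\rho$, ${\rm tr}(M\rho)\le{\rm tr}(N\mathcal E(\rho))+{\rm tr}(\rho)-{\rm tr}(\mathcal E(\rho))$. $\mathcal E\le_T^e\mathcal F$ (resp. $\le_P^e$) iff for every finite $W$ and $M,N\in\mathcal P(\mathcal H_W)$, $\mathcal E\models_{tot}(M,N)\Rightarrow\mathcal F\models_{tot}(M,N)$ (resp. with $\models_{par}$). *)

theory Defs
  imports Complex_Main "HOL-Library.Complex_Order"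
begin

text \<open>A computational basis state of the register X is an assignment
  s :: nat => bool that is False outside X.  An operator on H_X is a
  matrix indexed by such assignments; entries outside the register are 0.\<close>

type_synonym asgn = "nat \<Rightarrow> bool"
type_synonym op = "asgn \<Rightarrow> asgn \<Rightarrow> complex"
type_synonym vec = "asgn \<Rightarrow> complex"

definition asg :: "nat set \<Rightarrow> asgn set" where
  "asg X = {s. \<forall>q. q \<notin> X \<longrightarrow> \<not> s q}"

definition restr :: "nat set \<Rightarrow> asgn \<Rightarrow> asgn" where
  "restr X s = (\<lambda>q. q \<in> X \<and> s q)"

definition ops :: "nat set \<Rightarrow> op set" where
  "ops X = {A. \<forall>s t. (s \<notin> asg X \<or> t \<notin> asg X) \<longrightarrow> A s t = 0}"

definition tr :: "nat set \<Rightarrow> op \<Rightarrow> complex" where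
  "tr X A = (\<Sum>s\<in>asg X. A s s)"

definition mult :: "nat set \<Rightarrow> op \<Rightarrow> op \<Rightarrow> op" where
  "mult X A B = (\<lambda>s t. \<Sum>u\<in>asg X. A s u * B u t)"

definition idop :: "nat set \<Rightarrow> op" where
  "idop X = (\<lambda>s t. if s \<in> asg X \<and> s = t then 1 else 0)"

definition minus_op :: "op \<Rightarrow> op \<Rightarrow> op" where
  "minus_op A B = (\<lambda>s t. A s t - B s t)"

definition psd :: "nat set \<Rightarrow> op \<Rightarrow> bool" where
  "psd X A \<longleftrightarrow> A \<in> ops X \<and>
     (\<forall>\<psi> :: vec. 0 \<le> (\<Sum>s\<in>asg X. \<Sum>t\<in>asg X. cnj (\<psi> s) * A s t * \<psi> t))"

definition dens :: "nat set \<Rightarrow> op set" where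
  "dens X = {\<rho>. psd X \<rho> \<and> Re (tr X \<rho>) \<le> 1}"

definition effects :: "nat set \<Rightarrow> op set" where
  "effects X = {M. psd X M \<and> psd X (minus_op (idop X) M)}"

text \<open>Extension of an operator A on H_W to H_X (W \<subseteq> X): A \<otimes> I_{X-W}.\<close>
definition extOp :: "nat set \<Rightarrow> nat set \<Rightarrow> op \<Rightarrow> op" where
  "extOp X W A = (\<lambda>s t. if s \<in> asg X \<and> t \<in> asg X \<and> (\<forall>q\<in>X - W. s q = t q)
                        then A (restr W s) (restr W t) else 0)"

text \<open>Extension of a super-operator E on L(H_V) to L(H_X) (V \<subseteq> X):
  E \<otimes> id_{X-V}, defined blockwise: writing rho = \<Sum>_{a,b} rho_{ab} \<otimes> |a><b|
  with a, b basis states of X-V, the result is \<Sum>_{a,b} E(rho_{ab}) \<otimes> |a><b|.\<close>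
definition block :: "nat set \<Rightarrow> op \<Rightarrow> asgn \<Rightarrow> asgn \<Rightarrow> op" where
  "block V \<rho> a b = (\<lambda>u w. if u \<in> asg V \<and> w \<in> asg V
       then \<rho> (\<lambda>q. if q \<in> V then u q else a q) (\<lambda>q. if q \<in> V then w q else b q) else 0)"

definition extE :: "nat set \<Rightarrow> nat set \<Rightarrow> (op \<Rightarrow> op) \<Rightarrow> op \<Rightarrow> op" where
  "extE X V E \<rho> = (\<lambda>s t. if s \<in> asg X \<and> t \<in> asg X
       then E (block V \<rho> (restr (X - V) s) (restr (X - V) t)) (restr V s) (restr V t)
       else 0)"

text \<open>DProg(V): completely positive, trace-nonincreasing (linear) super-operators on L(H_V).
  Complete positivity: E \<otimes> id is positive for every finite ancilla register.\<close>
definition dprog :: "nat set \<Rightarrow> (op \<Rightarrow> op) \<Rightarrow> bool" where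
  "dprog V E \<longleftrightarrow>
     (\<forall>A\<in>ops V. E A \<in> ops V) \<and>
     (\<forall>A\<in>ops V. \<forall>B\<in>ops V. E (\<lambda>s t. A s t + B s t) = (\<lambda>s t. E A s t + E B s t)) \<and>
     (\<forall>c. \<forall>A\<in>ops V. E (\<lambda>s t. c * A s t) = (\<lambda>s t. c * E A s t)) \<and>
     (\<forall>X. finite X \<and> V \<subseteq> X \<longrightarrow> (\<forall>\<rho>. psd X \<rho> \<longrightarrow> psd X (extE X V E \<rho>))) \<and>
     (\<forall>\<rho>. psd V \<rho> \<longrightarrow> Re (tr V (E \<rho>)) \<le> Re (tr V \<rho>))"

definition adjoint :: "nat set \<Rightarrow> (op \<Rightarrow> op) \<Rightarrow> op \<Rightarrow> op" where
  "adjoint V E = (SOME F. (\<forall>B\<in>ops V. F B \<in> ops V) \<and>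
     (\<forall>A\<in>ops V. \<forall>B\<in>ops V. tr V (mult V (E A) B) = tr V (mult V A (F B))))"

definition sat_tot :: "nat set \<Rightarrow> (op \<Rightarrow> op) \<Rightarrow> nat set \<Rightarrow> op \<Rightarrow> op \<Rightarrow> bool" where
  "sat_tot V E W M N \<longleftrightarrow> (\<forall>X. finite X \<and> V \<union> W \<subseteq> X \<longrightarrow> (\<forall>\<rho>\<in>dens X.
     Re (tr X (mult X (extOp X W M) \<rho>)) \<le> Re (tr X (mult X (extOp X W N) (extE X V E \<rho>)))))"

definition sat_par :: "nat set \<Rightarrow> (op \<Rightarrow> op) \<Rightarrow> nat set \<Rightarrow> op \<Rightarrow> op \<Rightarrow> bool" where
  "sat_par V E W M N \<longleftrightarrow> (\<forall>X. finite X \<and> V \<union> W \<subseteq> X \<longrightarrow> (\<forall>\<rho>\<in>dens X.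
     Re (tr X (mult X (extOp X W M) \<rho>)) \<le>
       Re (tr X (mult X (extOp X W N) (extE X V E \<rho>)))
       + Re (tr X \<rho>) - Re (tr X (extE X V E \<rho>))))"

definition leT :: "nat set \<Rightarrow> (op \<Rightarrow> op) \<Rightarrow> (op \<Rightarrow> op) \<Rightarrow> bool" where
  "leT V E F \<longleftrightarrow> (\<forall>W M N. finite W \<and> M \<in> effects W \<and> N \<in> effects W \<longrightarrow>
     sat_tot V E W M N \<longrightarrow> sat_tot V F W M N)"

definition leP :: "nat set \<Rightarrow> (op \<Rightarrow> op) \<Rightarrow> (op \<Rightarrow> op) \<Rightarrow> bool" where
  "leP V E F \<longleftrightarrow> (\<forall>W M N. finite W \<and> M \<in> effects W \<and> N \<in> effects W \<longrightarrow>
     sat_par V E W M N \<longrightarrow> sat_par V F W M N)"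

definition onb :: "nat set \<Rightarrow> (nat \<Rightarrow> vec) \<Rightarrow> bool" where
  "onb V b \<longleftrightarrow> (\<forall>i<2 ^ card V. \<forall>j<2 ^ card V.
     (\<Sum>s\<in>asg V. cnj (b i s) * b j s) = (if i = j then 1 else 0))"

text \<open>Omega_{V,V'} = |omega><omega| with omega = d^{-1/2} \<Sum>_i |i>_V |i>_{V'}.\<close>
definition omega_vec :: "nat set \<Rightarrow> nat set \<Rightarrow> (nat \<Rightarrow> vec) \<Rightarrow> (nat \<Rightarrow> vec) \<Rightarrow> vec" where
  "omega_vec V V' b1 b2 = (\<lambda>s. if s \<in> asg (V \<union> V')
     then (\<Sum>i<2 ^ card V. b1 i (restr V s) * b2 i (restr V' s)) / complex_of_real (sqrt (2 ^ card V))
     else 0)"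

definition Omega :: "nat set \<Rightarrow> nat set \<Rightarrow> (nat \<Rightarrow> vec) \<Rightarrow> (nat \<Rightarrow> vec) \<Rightarrow> op" where
  "Omega V V' b1 b2 = (\<lambda>s t. omega_vec V V' b1 b2 s * cnj (omega_vec V V' b1 b2 t))"

end

theory Submission
  imports Defs
begin


definition qf :: "'a set \<Rightarrow> ('a \<Rightarrow> 'a \<Rightarrow> complex) \<Rightarrow> ('a \<Rightarrow> complex) \<Rightarrow> complex" where
  "qf S A \<psi> = (\<Sum>s\<in>S. \<Sum>t\<in>S. cnj (\<psi> s) * A s t * \<psi> t)"

definition pform :: "'a set \<Rightarrow> ('a \<Rightarrow> 'a \<Rightarrow> complex) \<Rightarrow> bool" where
  "pform S A \<longleftrightarrow> (\<forall>\<psi>. 0 \<le> qf S A \<psi>)"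

lemma qf_two:
  assumes "finite S" "s \<in> S" "t \<in> S" "s \<noteq> t"
  shows "qf S A (\<lambda>x. if x = s then a else if x = t then b else 0) =
    cnj a * A s s * a + cnj a * A s t * b + cnj b * A t s * a + cnj b * A t t * b"
proof -
  let ?p = "\<lambda>x. if x = s then a else if x = t then b else 0"
  have red: "(\<Sum>x\<in>S. f x) = (\<Sum>x\<in>{s,t}. f x)" if "\<And>x. x \<notin> {s,t} \<Longrightarrow> f x = 0" for f :: "_ \<Rightarrow> complex"
    by (rule sum.mono_neutral_right) (use assms that in auto)
  have "qf S A ?p = (\<Sum>x\<in>{s,t}. \<Sum>y\<in>{s,t}. cnj (?p x) * A x y * ?p y)"
    unfolding qf_def
    apply (subst red[where f="\<lambda>x. \<Sum>y\<in>S. cnj (?p x) * A x y * ?p y"]) apply simp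
    apply (rule sum.cong[OF refl])
    apply (rule red) apply auto
    done
  also have "\<dots> = cnj a * A s s * a + cnj a * A s t * b + cnj b * A t s * a + cnj b * A t t * b"
    using assms(4) by (simp add: algebra_simps)
  finally show ?thesis .
qed

lemma qf_one:
  assumes "finite S" "s \<in> S"
  shows "qf S A (\<lambda>x. if x = s then a else 0) = cnj a * A s s * a"
proof -
  let ?p = "\<lambda>x. if x = s then a else (0::complex)"
  have red: "(\<Sum>x\<in>S. f x) = (\<Sum>x\<in>{s}. f x)" if "\<And>x. x \<notin> {s} \<Longrightarrow> f x = 0" for f :: "_ \<Rightarrow> complex"
    by (rule sum.mono_neutral_right) (use assms that in auto)
  show ?thesis
    unfolding qf_def
    apply (subst red[where f="\<lambda>x. \<Sum>y\<in>S. cnj (?p x) * A x y * ?p y"]) apply simp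
    apply (subst red) apply auto
    done
qed

lemma pform_diag:
  assumes "finite S" "pform S A" "s \<in> S"
  shows "Im (A s s) = 0" "Re (A s s) \<ge> 0"
proof -
  have "0 \<le> qf S A (\<lambda>x. if x = s then 1 else 0)" using assms(2) by (simp add: pform_def)
  then have "0 \<le> A s s" using qf_one[OF assms(1,3), of A 1] by simp
  then show "Im (A s s) = 0" "Re (A s s) \<ge> 0" by (auto simp: less_eq_complex_def)
qed

lemma pform_herm:
  assumes "finite S" "pform S A" "s \<in> S" "t \<in> S"
  shows "A t s = cnj (A s t)"
proof (cases "s = t")
  case True then show ?thesis using pform_diag[OF assms(1,2,3)] by (simp add: complex_eq_iff)
next
  case False
  have d1: "Im (A s s) = 0" "Im (A t t) = 0" using pform_diag(1)[OF assms(1,2,3)] pform_diag(1)[OF assms(1,2,4)] by auto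
  have "0 \<le> qf S A (\<lambda>x. if x = s then 1 else if x = t then 1 else 0)" using assms(2) by (simp add: pform_def)
  then have h1: "Im (A s s + A s t + A t s + A t t) = 0"
    using qf_two[OF assms(1,3,4) False, of A 1 1] by (simp add: less_eq_complex_def)
  have "0 \<le> qf S A (\<lambda>x. if x = s then 1 else if x = t then \<i> else 0)" using assms(2) by (simp add: pform_def)
  then have h2: "Im (\<i> * A s t - \<i> * A t s + A s s + A t t) = 0"
    using qf_two[OF assms(1,3,4) False, of A 1 "\<i>"] by (simp add: less_eq_complex_def algebra_simps)
  show ?thesis using h1 h2 d1 by (simp add: complex_eq_iff)
qed


lemma pform_zero_row:
  assumes "finite S" "pform S A" "x \<in> S" "A x x = 0" "t \<in> S"
  shows "A x t = 0"
proof (rule ccontr)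
  assume c0: "A x t \<noteq> 0"
  then have tx: "t \<noteq> x" using assms(4) by auto
  define c where "c = A x t"
  have ht: "A t x = cnj c" using pform_herm[OF assms(1,2,3,5)] c_def by simp
  define n where "n = (cmod c)^2"
  have npos: "n > 0" using c0 c_def n_def by simp
  have cc: "cnj c * c = complex_of_real n" unfolding n_def using complex_norm_square[of c] by (simp add: mult.commute)
  define k where "k = (Re (A t t) + 1) / (2 * n)"
  define a where "a = - (complex_of_real k * c)"
  have "0 \<le> qf S A (\<lambda>y. if y = x then a else if y = t then 1 else 0)" using assms(2) by (simp add: pform_def)
  then have "0 \<le> cnj a * c + cnj c * a + A t t"
    using qf_two[OF assms(1,3,5) tx[symmetric], of A a 1] assms(4) ht c_def by simp
  also have "cnj a * c + cnj c * a + A t t = - complex_of_real (2 * k * n) + A t t"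
    unfolding a_def using cc by (simp add: algebra_simps)
  finally have "0 \<le> - 2 * k * n + Re (A t t)" by (simp add: less_eq_complex_def)
  moreover have "2 * k * n = Re (A t t) + 1" unfolding k_def using npos by simp
  ultimately show False by simp
qed

lemma qf_restrict:
  assumes "finite S" "x \<notin> S" "\<And>t. t \<in> insert x S \<Longrightarrow> A x t = 0" "\<And>t. t \<in> insert x S \<Longrightarrow> A t x = 0"
  shows "qf (insert x S) A \<psi> = qf S A \<psi>"
  unfolding qf_def using assms by (simp add: sum.insert)

lemma pform_restrict:
  assumes "finite S" "x \<notin> S" "pform (insert x S) A"
    "\<And>t. t \<in> insert x S \<Longrightarrow> A x t = 0" "\<And>t. t \<in> insert x S \<Longrightarrow> A t x = 0"
  shows "pform S A"
proof -
  have "qf (insert x S) A \<psi> = qf S A \<psi>" for \<psi>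
    by (rule qf_restrict) (use assms in auto)
  then show ?thesis using assms(3) unfolding pform_def by metis
qed

lemma sum_delta_r:
  assumes "finite S" "x \<in> S"
  shows "(\<Sum>t\<in>S. f t * (if t = x then m else 0)) = f x * (m::complex)"
proof -
  have "(\<Sum>t\<in>S. f t * (if t = x then m else 0)) = (\<Sum>t\<in>S. if t = x then f t * m else 0)"
    by (intro sum.cong) auto
  also have "\<dots> = f x * m" using assms by (simp add: sum.delta)
  finally show ?thesis .
qed

lemma sum_delta_l:
  assumes "finite S" "x \<in> S"
  shows "(\<Sum>t\<in>S. (if t = x then m else 0) * f t) = (m::complex) * f x"
  using sum_delta_r[OF assms, of f m] by (simp add: mult.commute)

lemma qf_delta:
  assumes "finite S" "x \<in> S"
  shows "qf S A (\<lambda>s. \<psi> s + (if s = x then m else 0)) =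
     qf S A \<psi> + cnj m * (\<Sum>t\<in>S. A x t * \<psi> t) + m * (\<Sum>s\<in>S. cnj (\<psi> s) * A s x) + cnj m * A x x * m"
proof -
  define d where "d = (\<lambda>s. if s = x then m else 0)"
  have cd: "cnj (d s) = (if s = x then cnj m else 0)" for s unfolding d_def by simp
  have "qf S A (\<lambda>s. \<psi> s + d s) =
    (\<Sum>s\<in>S. \<Sum>t\<in>S. cnj (\<psi> s) * A s t * \<psi> t) + (\<Sum>s\<in>S. \<Sum>t\<in>S. (cnj (\<psi> s) * A s t) * d t)
       + (\<Sum>s\<in>S. \<Sum>t\<in>S. cnj (d s) * (A s t * \<psi> t)) + (\<Sum>s\<in>S. \<Sum>t\<in>S. cnj (d s) * (A s t * d t))"
    unfolding qf_def by (simp add: sum.distrib algebra_simps)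
  also have "(\<Sum>s\<in>S. \<Sum>t\<in>S. (cnj (\<psi> s) * A s t) * d t) = (\<Sum>s\<in>S. cnj (\<psi> s) * A s x * m)"
    unfolding d_def using assms by (simp add: sum_delta_r)
  also have "(\<Sum>s\<in>S. \<Sum>t\<in>S. cnj (d s) * (A s t * \<psi> t)) = cnj m * (\<Sum>t\<in>S. A x t * \<psi> t)"
    unfolding cd using assms by (simp add: sum_delta_l sum_distrib_left[symmetric])
  also have "(\<Sum>s\<in>S. \<Sum>t\<in>S. cnj (d s) * (A s t * d t)) = cnj m * A x x * m"
    unfolding cd using assms by (simp add: sum_delta_l sum_distrib_left[symmetric] d_def sum_delta_r)
  finally show ?thesis unfolding d_def qf_def by (simp add: sum_distrib_left sum_distrib_right algebra_simps)
qed


lemma qf_diff_outer: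
  "qf S (\<lambda>s t. A s t - v s * cnj (v t)) \<psi> = qf S A \<psi> - (\<Sum>s\<in>S. cnj (\<psi> s) * v s) * cnj (\<Sum>t\<in>S. cnj (\<psi> t) * v t)"
  unfolding qf_def by (simp add: sum_subtractf algebra_simps sum_distrib_left sum_distrib_right)

lemma schur_step:
  assumes fin: "finite S" and p: "pform S A" and xS: "x \<in> S" and a: "Re (A x x) > 0"
  defines "v0 \<equiv> (\<lambda>s. A s x / complex_of_real (sqrt (Re (A x x))))"
  shows "pform S (\<lambda>s t. A s t - v0 s * cnj (v0 t))" and "A x x - v0 x * cnj (v0 x) = 0"
proof -
  define a where "a = Re (A x x)"
  have Axx: "A x x = complex_of_real a" using pform_diag(1)[OF fin p xS] a_def by (simp add: complex_eq_iff)
  have apos: "a > 0" using a a_def by simp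
  have sq: "complex_of_real (sqrt a) * complex_of_real (sqrt a) = complex_of_real a"
    using apos by (simp flip: of_real_mult)
  have v0e: "v0 s * cnj (v0 t) = A s x * cnj (A t x) / complex_of_real a" for s t
    unfolding v0_def a_def[symmetric] using sq by (simp add: field_simps)
  show "A x x - v0 x * cnj (v0 x) = 0" using v0e[of x x] Axx apos by simp
  show "pform S (\<lambda>s t. A s t - v0 s * cnj (v0 t))"
    unfolding pform_def
  proof
    fix \<psi>
    define \<beta> where "\<beta> = (\<Sum>t\<in>S. A x t * \<psi> t)"
    have g: "(\<Sum>s\<in>S. cnj (\<psi> s) * A s x) = cnj \<beta>"
      unfolding \<beta>_def using pform_herm[OF fin p xS] by (simp add: mult.commute)
    have "(\<Sum>s\<in>S. cnj (\<psi> s) * v0 s) = cnj \<beta> / complex_of_real (sqrt a)"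
      unfolding v0_def a_def[symmetric] using g by (simp add: sum_divide_distrib[symmetric] algebra_simps)
    then have "qf S (\<lambda>s t. A s t - v0 s * cnj (v0 t)) \<psi> = qf S A \<psi> - cnj \<beta> * \<beta> / complex_of_real a"
      unfolding qf_diff_outer using sq by (simp add: field_simps)
    also have "\<dots> = qf S A (\<lambda>s. \<psi> s + (if s = x then - \<beta> / complex_of_real a else 0))"
      unfolding qf_delta[OF fin xS] \<beta>_def[symmetric] g Axx using apos
      by (simp add: field_simps)
    finally show "0 \<le> qf S (\<lambda>s t. A s t - v0 s * cnj (v0 t)) \<psi>" using p unfolding pform_def by simp
  qed
qed

lemma zero_row_decomp:
  assumes fin: "finite S" and xS: "x \<notin> S" and p: "pform (insert x S) A" and z: "A x x = 0"
    and IH: "\<And>A. pform S A \<Longrightarrow> \<exists>vs. \<forall>s\<in>S. \<forall>t\<in>S. A s t = (\<Sum>v\<leftarrow>vs. v s * cnj (v t))"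
  shows "\<exists>vs. \<forall>s\<in>insert x S. \<forall>t\<in>insert x S. A s t = (\<Sum>v\<leftarrow>vs. v s * cnj (v t))"
proof -
  have fin': "finite (insert x S)" using fin by simp
  have r: "A x t = 0" if "t \<in> insert x S" for t using pform_zero_row[OF fin' p _ z that] by simp
  have c: "A t x = 0" if "t \<in> insert x S" for t using pform_herm[OF fin' p _ that, of x] r[OF that] by simp
  have "pform S A" by (rule pform_restrict[OF fin xS p r c])
  from IH[OF this] obtain vs where vs: "\<forall>s\<in>S. \<forall>t\<in>S. A s t = (\<Sum>v\<leftarrow>vs. v s * cnj (v t))" by blast
  define ws where "ws = map (\<lambda>v. v(x := 0)) vs"
  have "\<forall>s\<in>insert x S. \<forall>t\<in>insert x S. A s t = (\<Sum>w\<leftarrow>ws. w s * cnj (w t))"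
  proof (intro ballI)
    fix s t assume s: "s \<in> insert x S" and t: "t \<in> insert x S"
    show "A s t = (\<Sum>w\<leftarrow>ws. w s * cnj (w t))"
    proof (cases "s = x \<or> t = x")
      case True then show ?thesis using r[OF t] c[OF s] unfolding ws_def
        by (auto simp: o_def)
    next
      case False then show ?thesis using vs s t unfolding ws_def by (simp add: o_def)
    qed
  qed
  then show ?thesis by blast
qed

lemma chol:
  assumes "finite S" "pform S A"
  shows "\<exists>vs. \<forall>s\<in>S. \<forall>t\<in>S. A s t = (\<Sum>v\<leftarrow>vs. v s * cnj (v t))"
  using assms
proof (induction S arbitrary: A rule: finite_induct)
  case empty then show ?case by auto
next
  case (insert x S)
  have fin': "finite (insert x S)" using insert by simp
  have xin: "x \<in> insert x S" by simp
  show ?case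
  proof (cases "Re (A x x) > 0")
    case False
    then have "A x x = 0" using pform_diag[OF fin' insert.prems xin] by (simp add: complex_eq_iff)
    then show ?thesis using zero_row_decomp[OF insert.hyps(1,2) insert.prems _ insert.IH] by blast
  next
    case True
    define v0 where "v0 = (\<lambda>s. A s x / complex_of_real (sqrt (Re (A x x))))"
    define A' where "A' = (\<lambda>s t. A s t - v0 s * cnj (v0 t))"
    have p': "pform (insert x S) A'" and z': "A' x x = 0"
      using schur_step[OF fin' insert.prems xin True] unfolding A'_def v0_def by auto
    obtain vs where vs: "\<forall>s\<in>insert x S. \<forall>t\<in>insert x S. A' s t = (\<Sum>v\<leftarrow>vs. v s * cnj (v t))"
      using zero_row_decomp[OF insert.hyps(1,2) p' z' insert.IH] by blast
    have "\<forall>s\<in>insert x S. \<forall>t\<in>insert x S. A s t = (\<Sum>v\<leftarrow>v0 # vs. v s * cnj (v t))"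
      using vs unfolding A'_def by (simp add: diff_eq_eq add.commute)
    then show ?thesis by blast
  qed
qed


lemma chol_idx:
  assumes "finite S" "pform S A"
  shows "\<exists>(n::nat) v. \<forall>s\<in>S. \<forall>t\<in>S. A s t = (\<Sum>k<n. v k s * cnj (v k t))"
proof -
  obtain vs where vs: "\<forall>s\<in>S. \<forall>t\<in>S. A s t = (\<Sum>v\<leftarrow>vs. v s * cnj (v t))" using chol[OF assms] by blast
  have e: "(\<Sum>v\<leftarrow>vs. v s * cnj (v t)) = (\<Sum>k<length vs. (vs ! k) s * cnj ((vs ! k) t))" for s t
    by (simp add: sum_list_sum_nth atLeast0LessThan)
  have "\<forall>s\<in>S. \<forall>t\<in>S. A s t = (\<Sum>k<length vs. (vs ! k) s * cnj ((vs ! k) t))"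
    using vs e by simp
  then show ?thesis by blast
qed

definition jn :: "nat set \<Rightarrow> asgn \<Rightarrow> asgn \<Rightarrow> asgn" where
  "jn V u a = (\<lambda>q. if q \<in> V then u q else a q)"

lemma asg_eq_image: "asg X = (\<lambda>S q. q \<in> S) ` Pow X"
proof
  show "asg X \<subseteq> (\<lambda>S q. q \<in> S) ` Pow X"
  proof
    fix s assume "s \<in> asg X"
    then have "s = (\<lambda>q. q \<in> {q. s q})" "{q. s q} \<in> Pow X" by (auto simp: asg_def)
    then show "s \<in> (\<lambda>S q. q \<in> S) ` Pow X" by blast
  qed
  show "(\<lambda>S q. q \<in> S) ` Pow X \<subseteq> asg X" by (auto simp: asg_def)
qed

lemma finite_asg[simp]: "finite X \<Longrightarrow> finite (asg X)"
  by (simp add: asg_eq_image)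

lemma card_asg: "finite X \<Longrightarrow> card (asg X) = 2 ^ card X"
proof -
  assume f: "finite X"
  have "inj_on (\<lambda>S q. q \<in> S) (Pow X)" by (rule inj_onI) (auto simp: fun_eq_iff)
  then show ?thesis by (simp add: asg_eq_image card_image card_Pow f)
qed

lemma restr_asg[simp]: "restr X s \<in> asg X" by (simp add: restr_def asg_def)

lemma restr_id: "s \<in> asg X \<Longrightarrow> restr X s = s" by (auto simp: restr_def asg_def fun_eq_iff)

lemma jn_restr: "s \<in> asg X \<Longrightarrow> Y \<subseteq> X \<Longrightarrow> jn Y (restr Y s) (restr (X - Y) s) = s"
  by (auto simp: jn_def restr_def asg_def fun_eq_iff)

lemma jn_asg: "u \<in> asg Y \<Longrightarrow> a \<in> asg (X - Y) \<Longrightarrow> Y \<subseteq> X \<Longrightarrow> jn Y u a \<in> asg X"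
  by (auto simp: jn_def asg_def)

lemma restr_jn1: "u \<in> asg Y \<Longrightarrow> restr Y (jn Y u a) = u"
  by (auto simp: jn_def restr_def asg_def fun_eq_iff)

lemma restr_jn2: "a \<in> asg (X - Y) \<Longrightarrow> restr (X - Y) (jn Y u a) = a"
  by (auto simp: jn_def restr_def asg_def fun_eq_iff)

lemma sum_split:
  assumes "finite X" "Y \<subseteq> X"
  shows "(\<Sum>s\<in>asg X. f s) = (\<Sum>u\<in>asg Y. \<Sum>a\<in>asg (X - Y). f (jn Y u a))"
proof -
  have bij: "bij_betw (\<lambda>(u, a). jn Y u a) (asg Y \<times> asg (X - Y)) (asg X)"
  proof (rule bij_betw_byWitness[where f' = "\<lambda>s. (restr Y s, restr (X - Y) s)"])
    show "\<forall>x\<in>asg Y \<times> asg (X - Y). (\<lambda>s. (restr Y s, restr (X - Y) s)) ((\<lambda>(u, a). jn Y u a) x) = x"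
      by (auto simp: restr_jn1 restr_jn2)
    show "\<forall>y\<in>asg X. (\<lambda>(u, a). jn Y u a) (restr Y y, restr (X - Y) y) = y"
      using assms by (auto simp: jn_restr)
    show "(\<lambda>(u, a). jn Y u a) ` (asg Y \<times> asg (X - Y)) \<subseteq> asg X"
      using assms by (auto simp: jn_asg)
    show "(\<lambda>s. (restr Y s, restr (X - Y) s)) ` asg X \<subseteq> asg Y \<times> asg (X - Y)" by auto
  qed
  have "(\<Sum>s\<in>asg X. f s) = (\<Sum>x\<in>asg Y \<times> asg (X - Y). f ((\<lambda>(u, a). jn Y u a) x))"
    using sum.reindex_bij_betw[OF bij, of f] by simp
  also have "\<dots> = (\<Sum>u\<in>asg Y. \<Sum>a\<in>asg (X - Y). f (jn Y u a))"
    by (simp add: sum.cartesian_product split_def)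
  finally show ?thesis .
qed

definition unitop :: "asgn \<Rightarrow> asgn \<Rightarrow> op" where
  "unitop u w = (\<lambda>s t. if s = u \<and> t = w then 1 else 0)"

definition kap :: "(op \<Rightarrow> op) \<Rightarrow> asgn \<Rightarrow> asgn \<Rightarrow> asgn \<Rightarrow> asgn \<Rightarrow> complex" where
  "kap E u w s t = E (unitop u w) s t"

lemma dprog_ops: "dprog V E \<Longrightarrow> A \<in> ops V \<Longrightarrow> E A \<in> ops V"
  unfolding dprog_def by simp

lemma dprog_add: "dprog V E \<Longrightarrow> A \<in> ops V \<Longrightarrow> B \<in> ops V \<Longrightarrow>
    E (\<lambda>s t. A s t + B s t) = (\<lambda>s t. E A s t + E B s t)"
  unfolding dprog_def by (elim conjE) (drule bspec, assumption, drule bspec, assumption)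

lemma dprog_smult: "dprog V E \<Longrightarrow> A \<in> ops V \<Longrightarrow> E (\<lambda>s t. c * A s t) = (\<lambda>s t. c * E A s t)"
  unfolding dprog_def by (elim conjE) (drule spec[of _ c], drule bspec, assumption)

lemma dprog_cp: "dprog V E \<Longrightarrow> finite X \<Longrightarrow> V \<subseteq> X \<Longrightarrow> psd X \<rho> \<Longrightarrow> psd X (extE X V E \<rho>)"
  unfolding dprog_def by simp

lemma dprog_tr: "dprog V E \<Longrightarrow> psd V \<rho> \<Longrightarrow> Re (tr V (E \<rho>)) \<le> Re (tr V \<rho>)"
  unfolding dprog_def by simp

lemma dprog_zero: "dprog V E \<Longrightarrow> E (\<lambda>s t. 0) = (\<lambda>s t. 0)"
proof -
  assume d: "dprog V E"
  have z: "(\<lambda>s t. 0::complex) \<in> ops V" by (simp add: ops_def)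
  have "E (\<lambda>s t. 0 * (0::complex)) = (\<lambda>s t. 0 * E (\<lambda>s t. 0) s t)"
    using dprog_smult[OF d z, of 0] by simp
  then show ?thesis by simp
qed

lemma dprog_sum:
  assumes d: "dprog V E" and fI: "finite I" and B: "\<And>i. i \<in> I \<Longrightarrow> B i \<in> ops V"
  shows "E (\<lambda>s t. \<Sum>i\<in>I. B i s t) = (\<lambda>s t. \<Sum>i\<in>I. E (B i) s t)"
  using fI B
proof (induction I rule: finite_induct)
  case empty then show ?case using dprog_zero[OF d] by simp
next
  case (insert x I)
  have o1: "(\<lambda>s t. \<Sum>i\<in>I. B i s t) \<in> ops V" using insert.prems by (auto simp: ops_def)
  have o2: "B x \<in> ops V" using insert.prems by simp
  have "(\<lambda>s t. \<Sum>i\<in>insert x I. B i s t) = (\<lambda>s t. B x s t + (\<Sum>i\<in>I. B i s t))"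
    using insert.hyps by simp
  then have "E (\<lambda>s t. \<Sum>i\<in>insert x I. B i s t) = E (\<lambda>s t. B x s t + (\<Sum>i\<in>I. B i s t))"
    by simp
  also have "\<dots> = (\<lambda>s t. E (B x) s t + E (\<lambda>s t. \<Sum>i\<in>I. B i s t) s t)"
    by (rule dprog_add[OF d o2 o1])
  also have "\<dots> = (\<lambda>s t. \<Sum>i\<in>insert x I. E (B i) s t)" using insert by simp
  finally show ?case .
qed

lemma unitop_ops: "u \<in> asg V \<Longrightarrow> w \<in> asg V \<Longrightarrow> unitop u w \<in> ops V"
  by (auto simp: unitop_def ops_def)

lemma lin_expand:
  assumes d: "dprog V E" and fV: "finite V" and A: "A \<in> ops V"
  shows "E A = (\<lambda>s t. \<Sum>u\<in>asg V. \<Sum>w\<in>asg V. A u w * kap E u w s t)"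
proof -
  define B where "B = (\<lambda>(u, w). (\<lambda>s t. A u w * unitop u w s t))"
  have Bops: "B i \<in> ops V" if "i \<in> asg V \<times> asg V" for i using that by (auto simp: B_def unitop_def ops_def)
  have Aeq: "A = (\<lambda>s t. \<Sum>i\<in>asg V \<times> asg V. B i s t)"
  proof (intro ext)
    fix s t
    show "A s t = (\<Sum>i\<in>asg V \<times> asg V. B i s t)"
    proof (cases "s \<in> asg V \<and> t \<in> asg V")
      case True
      have "(\<Sum>i\<in>asg V \<times> asg V. B i s t) = (\<Sum>i\<in>asg V \<times> asg V. if i = (s, t) then A s t else 0)"
        by (intro sum.cong) (auto simp: B_def unitop_def split: if_splits)
      also have "\<dots> = A s t" using True fV by (simp add: sum.delta)
      finally show ?thesis by simp
    next
      case False
      then have "A s t = 0" using A by (auto simp: ops_def)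
      moreover have "(\<Sum>i\<in>asg V \<times> asg V. B i s t) = 0"
        using False by (intro sum.neutral) (auto simp: B_def unitop_def split: if_splits)
      ultimately show ?thesis by simp
    qed
  qed
  have EB: "E (B i) = (\<lambda>s t. (case i of (u, w) \<Rightarrow> A u w * kap E u w s t))" if hi: "i \<in> asg V \<times> asg V" for i
  proof -
    obtain u w where i: "i = (u, w)" "u \<in> asg V" "w \<in> asg V" using hi by auto
    have "E (\<lambda>s t. A u w * unitop u w s t) = (\<lambda>s t. A u w * E (unitop u w) s t)"
      by (rule dprog_smult[OF d unitop_ops[OF i(2,3)]])
    then show ?thesis using i by (simp add: B_def kap_def)
  qed
  have "E A = (\<lambda>s t. \<Sum>i\<in>asg V \<times> asg V. E (B i) s t)"
    by (subst Aeq, rule dprog_sum[OF d]) (use fV Bops in auto)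
  also have "\<dots> = (\<lambda>s t. \<Sum>i\<in>asg V \<times> asg V. (case i of (u, w) \<Rightarrow> A u w * kap E u w s t))"
    using EB by (intro ext sum.cong) auto
  also have "\<dots> = (\<lambda>s t. \<Sum>u\<in>asg V. \<Sum>w\<in>asg V. A u w * kap E u w s t)"
    by (simp add: sum.cartesian_product)
  finally show ?thesis .
qed

lemma block_ops: "block V \<rho> a b \<in> ops V" by (auto simp: block_def ops_def)

lemma extE_kap:
  assumes d: "dprog V E" and fV: "finite V"
  shows "extE X V E \<rho> s t = (if s \<in> asg X \<and> t \<in> asg X then
     (\<Sum>u\<in>asg V. \<Sum>w\<in>asg V. \<rho> (jn V u (restr (X - V) s)) (jn V w (restr (X - V) t)) * kap E u w (restr V s) (restr V t))
     else 0)"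
proof -
  have "E (block V \<rho> a b) x y = (\<Sum>u\<in>asg V. \<Sum>w\<in>asg V. \<rho> (jn V u a) (jn V w b) * kap E u w x y)" for a b x y
  proof -
    have "E (block V \<rho> a b) x y = (\<Sum>u\<in>asg V. \<Sum>w\<in>asg V. block V \<rho> a b u w * kap E u w x y)"
      by (subst lin_expand[OF d fV block_ops]) (rule refl)
    also have "\<dots> = (\<Sum>u\<in>asg V. \<Sum>w\<in>asg V. \<rho> (jn V u a) (jn V w b) * kap E u w x y)"
      by (intro sum.cong refl) (simp add: block_def jn_def)
    finally show ?thesis .
  qed
  then show ?thesis unfolding extE_def by presburger
qed


lemma swap4: "(\<Sum>a\<in>A. \<Sum>b\<in>B. \<Sum>u\<in>U. \<Sum>w\<in>W. F a b u w) = (\<Sum>u\<in>U. \<Sum>w\<in>W. \<Sum>a\<in>A. \<Sum>b\<in>B. (F a b u w :: 'z::comm_monoid_add))"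
proof -
  have "(\<Sum>a\<in>A. \<Sum>b\<in>B. \<Sum>u\<in>U. \<Sum>w\<in>W. F a b u w) = (\<Sum>a\<in>A. \<Sum>u\<in>U. \<Sum>b\<in>B. \<Sum>w\<in>W. F a b u w)"
    by (intro sum.cong refl, rule sum.swap)
  also have "\<dots> = (\<Sum>a\<in>A. \<Sum>u\<in>U. \<Sum>w\<in>W. \<Sum>b\<in>B. F a b u w)"
    by (intro sum.cong refl, rule sum.swap)
  also have "\<dots> = (\<Sum>u\<in>U. \<Sum>a\<in>A. \<Sum>w\<in>W. \<Sum>b\<in>B. F a b u w)"
    by (rule sum.swap)
  also have "\<dots> = (\<Sum>u\<in>U. \<Sum>w\<in>W. \<Sum>a\<in>A. \<Sum>b\<in>B. F a b u w)"
    by (intro sum.cong refl, rule sum.swap)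
  finally show ?thesis .
qed

lemma sum6: "(\<Sum>p\<in>P. \<Sum>a\<in>Aa. \<Sum>q\<in>P. \<Sum>b\<in>Aa. cnj(N p a) * (\<Sum>u\<in>P. \<Sum>w\<in>P. Rr u a * cnj(Rr w b) * K u w p q) * N q b)
  = (\<Sum>p\<in>P. \<Sum>q\<in>P. \<Sum>u\<in>P. \<Sum>w\<in>P. K u w p q * (\<Sum>a\<in>Aa. cnj (N p a) * Rr u a) * cnj (\<Sum>b\<in>Aa. cnj (N q b) * Rr w b))"
proof -
  have "(\<Sum>p\<in>P. \<Sum>a\<in>Aa. \<Sum>q\<in>P. \<Sum>b\<in>Aa. cnj(N p a) * (\<Sum>u\<in>P. \<Sum>w\<in>P. Rr u a * cnj(Rr w b) * K u w p q) * N q b)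
    = (\<Sum>p\<in>P. \<Sum>q\<in>P. \<Sum>a\<in>Aa. \<Sum>b\<in>Aa. \<Sum>u\<in>P. \<Sum>w\<in>P. K u w p q * (cnj (N p a) * Rr u a) * (N q b * cnj (Rr w b)))"
    apply (rule sum.cong[OF refl])
    apply (simp add: sum_distrib_left sum_distrib_right mult_ac)
    apply (rule sum.swap)
    done
  also have "\<dots> = (\<Sum>p\<in>P. \<Sum>q\<in>P. \<Sum>u\<in>P. \<Sum>w\<in>P. \<Sum>a\<in>Aa. \<Sum>b\<in>Aa. K u w p q * (cnj (N p a) * Rr u a) * (N q b * cnj (Rr w b)))"
    by (intro sum.cong refl, rule swap4)
  also have "\<dots> = (\<Sum>p\<in>P. \<Sum>q\<in>P. \<Sum>u\<in>P. \<Sum>w\<in>P. K u w p q * (\<Sum>a\<in>Aa. cnj (N p a) * Rr u a) * cnj (\<Sum>b\<in>Aa. cnj (N q b) * Rr w b))"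
    by (simp add: sum_distrib_left sum_distrib_right mult_ac)
  finally show ?thesis .
qed

lemma sum_split2:
  assumes "finite X" "Y \<subseteq> X"
  shows "(\<Sum>s\<in>asg X. \<Sum>t\<in>asg X. f s t) =
    (\<Sum>p\<in>asg Y. \<Sum>a\<in>asg (X - Y). \<Sum>q\<in>asg Y. \<Sum>b\<in>asg (X - Y). f (jn Y p a) (jn Y q b))"
proof -
  have "(\<Sum>s\<in>asg X. \<Sum>t\<in>asg X. f s t) = (\<Sum>p\<in>asg Y. \<Sum>a\<in>asg (X - Y). \<Sum>t\<in>asg X. f (jn Y p a) t)"
    by (rule sum_split[OF assms])
  also have "\<dots> = (\<Sum>p\<in>asg Y. \<Sum>a\<in>asg (X - Y). \<Sum>q\<in>asg Y. \<Sum>b\<in>asg (X - Y). f (jn Y p a) (jn Y q b))"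
    by (rule sum.cong[OF refl], rule sum.cong[OF refl], rule sum_split[OF assms])
  finally show ?thesis .
qed

definition outer :: "vec \<Rightarrow> op" where "outer v = (\<lambda>s t. v s * cnj (v t))"

definition Gm :: "nat set \<Rightarrow> nat set \<Rightarrow> vec \<Rightarrow> vec \<Rightarrow> asgn \<Rightarrow> asgn \<Rightarrow> complex" where
  "Gm X V n r p u = (\<Sum>a\<in>asg (X - V). cnj (n (jn V p a)) * r (jn V u a))"

definition Phi :: "nat set \<Rightarrow> (op \<Rightarrow> op) \<Rightarrow> (asgn \<Rightarrow> asgn \<Rightarrow> complex) \<Rightarrow> complex" where
  "Phi V D G = (\<Sum>p\<in>asg V. \<Sum>q\<in>asg V. \<Sum>u\<in>asg V. \<Sum>w\<in>asg V. kap D u w p q * G p u * cnj (G q w))"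

lemma qf_extE_outer:
  assumes d: "dprog V D" and fX: "finite X" and VX: "V \<subseteq> X"
  shows "qf (asg X) (extE X V D (outer r)) n = Phi V D (Gm X V n r)"
proof -
  have fV: "finite V" using fX VX finite_subset by blast
  let ?R = "X - V"
  have "qf (asg X) (extE X V D (outer r)) n = (\<Sum>s\<in>asg X. \<Sum>t\<in>asg X. cnj (n s) *
     (\<Sum>u\<in>asg V. \<Sum>w\<in>asg V. r (jn V u (restr ?R s)) * cnj (r (jn V w (restr ?R t))) * kap D u w (restr V s) (restr V t)) * n t)"
    unfolding qf_def by (intro sum.cong refl) (simp add: extE_kap[OF d fV] outer_def)
  also have "\<dots> = (\<Sum>p\<in>asg V. \<Sum>a\<in>asg ?R. \<Sum>q\<in>asg V. \<Sum>b\<in>asg ?R. cnj (n (jn V p a)) *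
     (\<Sum>u\<in>asg V. \<Sum>w\<in>asg V. r (jn V u a) * cnj (r (jn V w b)) * kap D u w p q) * n (jn V q b))"
    by (subst sum_split2[OF fX VX], intro sum.cong refl) (simp add: restr_jn1 restr_jn2)
  also have "\<dots> = Phi V D (Gm X V n r)"
    unfolding Phi_def Gm_def
  proof -
    show "(\<Sum>p\<in>asg V. \<Sum>a\<in>asg ?R. \<Sum>q\<in>asg V. \<Sum>b\<in>asg ?R. cnj (n (jn V p a)) *
     (\<Sum>u\<in>asg V. \<Sum>w\<in>asg V. r (jn V u a) * cnj (r (jn V w b)) * kap D u w p q) * n (jn V q b)) =
     (\<Sum>p\<in>asg V. \<Sum>q\<in>asg V. \<Sum>u\<in>asg V. \<Sum>w\<in>asg V. kap D u w p q * (\<Sum>a\<in>asg ?R. cnj (n (jn V p a)) * r (jn V u a)) *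
        cnj (\<Sum>a\<in>asg ?R. cnj (n (jn V q a)) * r (jn V w a)))"
    proof -
      have "(\<Sum>p\<in>asg V. \<Sum>a\<in>asg ?R. \<Sum>q\<in>asg V. \<Sum>b\<in>asg ?R. cnj (n (jn V p a)) *
     (\<Sum>u\<in>asg V. \<Sum>w\<in>asg V. r (jn V u a) * cnj (r (jn V w b)) * kap D u w p q) * n (jn V q b))
    = (\<Sum>p\<in>asg V. \<Sum>q\<in>asg V. \<Sum>a\<in>asg ?R. \<Sum>b\<in>asg ?R. \<Sum>u\<in>asg V. \<Sum>w\<in>asg V. kap D u w p q * (cnj (n (jn V p a)) * r (jn V u a)) * (n (jn V q b) * cnj (r (jn V w b))))"
        apply (rule sum.cong[OF refl])
        apply (simp add: sum_distrib_left sum_distrib_right mult_ac)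
        apply (rule sum.swap)
        done
      also have "\<dots> = (\<Sum>p\<in>asg V. \<Sum>q\<in>asg V. \<Sum>u\<in>asg V. \<Sum>w\<in>asg V. \<Sum>a\<in>asg ?R. \<Sum>b\<in>asg ?R. kap D u w p q * (cnj (n (jn V p a)) * r (jn V u a)) * (n (jn V q b) * cnj (r (jn V w b))))"
        by (rule sum.cong[OF refl], rule sum.cong[OF refl], rule swap4)
      also have "\<dots> = (\<Sum>p\<in>asg V. \<Sum>q\<in>asg V. \<Sum>u\<in>asg V. \<Sum>w\<in>asg V. kap D u w p q * (\<Sum>a\<in>asg ?R. cnj (n (jn V p a)) * r (jn V u a)) *
        cnj (\<Sum>a\<in>asg ?R. cnj (n (jn V q a)) * r (jn V w a)))"
        by (simp add: sum_distrib_left sum_distrib_right mult_ac)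
      finally show ?thesis .
    qed
  qed
  finally show ?thesis .
qed


lemma tr_mult_decomp:
  assumes "\<forall>s\<in>asg X. \<forall>t\<in>asg X. A s t = (\<Sum>k<m. v k s * cnj (v k t))"
  shows "tr X (mult X A P) = (\<Sum>k<m. qf (asg X) P (v k))"
proof -
  have "tr X (mult X A P) = (\<Sum>s\<in>asg X. \<Sum>u\<in>asg X. (\<Sum>k<m. v k s * cnj (v k u)) * P u s)"
    unfolding tr_def mult_def using assms by (intro sum.cong refl) simp
  also have "\<dots> = (\<Sum>s\<in>asg X. \<Sum>u\<in>asg X. \<Sum>k<m. cnj (v k u) * P u s * v k s)"
    by (simp add: sum_distrib_left sum_distrib_right mult_ac)
  also have "\<dots> = (\<Sum>s\<in>asg X. \<Sum>k<m. \<Sum>u\<in>asg X. cnj (v k u) * P u s * v k s)"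
    by (rule sum.cong[OF refl], rule sum.swap)
  also have "\<dots> = (\<Sum>k<m. \<Sum>s\<in>asg X. \<Sum>u\<in>asg X. cnj (v k u) * P u s * v k s)"
    by (rule sum.swap)
  also have "\<dots> = (\<Sum>k<m. \<Sum>u\<in>asg X. \<Sum>s\<in>asg X. cnj (v k u) * P u s * v k s)"
    by (rule sum.cong[OF refl], rule sum.swap)
  also have "\<dots> = (\<Sum>k<m. qf (asg X) P (v k))" unfolding qf_def by simp
  finally show ?thesis .
qed

lemma qf_sum_op:
  assumes "\<forall>s\<in>asg X. \<forall>t\<in>asg X. P s t = (\<Sum>l<m. Q l s t)"
  shows "qf (asg X) P n = (\<Sum>l<m. qf (asg X) (Q l) n)"
  unfolding qf_def using assms
  by (simp add: sum_distrib_left sum_distrib_right sum.swap[of _ "{..<m}"] cong: sum.cong)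

lemma extE_sum_outer:
  assumes d: "dprog V D" and fX: "finite X" and VX: "V \<subseteq> X"
    and r: "\<forall>s\<in>asg X. \<forall>t\<in>asg X. \<rho> s t = (\<Sum>l<m. r l s * cnj (r l t))"
  shows "\<forall>s\<in>asg X. \<forall>t\<in>asg X. extE X V D \<rho> s t = (\<Sum>l<m. extE X V D (outer (r l)) s t)"
proof (intro ballI)
  fix s t assume s: "s \<in> asg X" and t: "t \<in> asg X"
  have fV: "finite V" using fX VX finite_subset by blast
  have j: "jn V u (restr (X - V) x) \<in> asg X" if "u \<in> asg V" for u x using jn_asg[OF that restr_asg VX] .
  show "extE X V D \<rho> s t = (\<Sum>l<m. extE X V D (outer (r l)) s t)"
    using s t unfolding extE_kap[OF d fV]
    by (simp add: r j outer_def sum_distrib_right sum.swap[of _ "{..<m}"] cong: sum.cong)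
qed

lemma g_decomp:
  assumes d: "dprog V D" and fX: "finite X" and VX: "V \<subseteq> X"
    and K: "\<forall>s\<in>asg X. \<forall>t\<in>asg X. K s t = (\<Sum>k<m. n k s * cnj (n k t))"
    and r: "\<forall>s\<in>asg X. \<forall>t\<in>asg X. \<rho> s t = (\<Sum>l<m'. r l s * cnj (r l t))"
  shows "tr X (mult X K (extE X V D \<rho>)) = (\<Sum>k<m. \<Sum>l<m'. Phi V D (Gm X V (n k) (r l)))"
  unfolding tr_mult_decomp[OF K] qf_sum_op[OF extE_sum_outer[OF d fX VX r]]
  by (simp add: qf_extE_outer[OF d fX VX])

lemma key_transfer:
  assumes d1: "dprog V D1" and d2: "dprog V D2" and fX: "finite X" and VX: "V \<subseteq> X"
    and hyp: "\<And>G. Re (Phi V D1 G) \<le> Re (Phi V D2 G)"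
    and pK: "pform (asg X) K" and p\<rho>: "pform (asg X) \<rho>"
  shows "Re (tr X (mult X K (extE X V D1 \<rho>))) \<le> Re (tr X (mult X K (extE X V D2 \<rho>)))"
proof -
  obtain m :: nat and n where K: "\<forall>s\<in>asg X. \<forall>t\<in>asg X. K s t = (\<Sum>k<m. n k s * cnj (n k t))"
    using chol_idx[OF finite_asg[OF fX] pK] by blast
  obtain m' :: nat and r where r: "\<forall>s\<in>asg X. \<forall>t\<in>asg X. \<rho> s t = (\<Sum>l<m'. r l s * cnj (r l t))"
    using chol_idx[OF finite_asg[OF fX] p\<rho>] by blast
  show ?thesis
    unfolding g_decomp[OF d1 fX VX K r] g_decomp[OF d2 fX VX K r] Re_sum
    by (intro sum_mono hyp)
qed


lemma cnj_mult_self_nonneg: "0 \<le> cnj z * (z::complex)"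
  using complex_norm_square[of z] by (simp add: less_eq_complex_def mult.commute)

lemma qf_outer: "qf S (outer v) \<psi> = cnj (\<Sum>t\<in>S. cnj (v t) * \<psi> t) * (\<Sum>t\<in>S. cnj (v t) * \<psi> t)"
  unfolding qf_def outer_def by (simp add: sum_distrib_left sum_distrib_right mult_ac)

lemma psd_outer:
  assumes "\<And>s. s \<notin> asg X \<Longrightarrow> v s = 0"
  shows "psd X (outer v)"
  unfolding psd_def
proof (intro conjI allI)
  show "outer v \<in> ops X" using assms by (auto simp: ops_def outer_def)
  fix \<psi> :: vec
  have "(\<Sum>s\<in>asg X. \<Sum>t\<in>asg X. cnj (\<psi> s) * outer v s t * \<psi> t) = qf (asg X) (outer v) \<psi>"
    by (simp add: qf_def)
  then show "0 \<le> (\<Sum>s\<in>asg X. \<Sum>t\<in>asg X. cnj (\<psi> s) * outer v s t * \<psi> t)"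
    using qf_outer cnj_mult_self_nonneg by metis
qed

lemma psd_pform: "psd X A \<Longrightarrow> pform (asg X) A"
  by (simp add: psd_def pform_def qf_def)

lemma tr_idop: assumes fX: "finite X" shows "tr X (mult X (idop X) \<rho>) = tr X \<rho>"
  unfolding tr_def mult_def idop_def
proof (rule sum.cong[OF refl])
  fix s assume s: "s \<in> asg X"
  have "(\<Sum>u\<in>asg X. (if s \<in> asg X \<and> s = u then 1 else 0) * \<rho> u s) = (\<Sum>u\<in>asg X. (if u = s then 1 else 0) * \<rho> u s)"
    using s by (intro sum.cong) auto
  also have "\<dots> = \<rho> s s" using s fX by (simp add: sum_delta_l)
  finally show "(\<Sum>u\<in>asg X. (if s \<in> asg X \<and> s = u then 1 else 0) * \<rho> u s) = \<rho> s s" .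
qed

lemma extOp_idop: "W \<subseteq> X \<Longrightarrow> extOp X W (idop W) = idop X"
  unfolding extOp_def idop_def
  by (auto simp: fun_eq_iff restr_def asg_def)

lemma extOp_minus: "extOp X W (minus_op A B) = minus_op (extOp X W A) (extOp X W B)"
  unfolding extOp_def minus_op_def by (simp add: fun_eq_iff)

lemma tr_mult_minus: "tr X (mult X (minus_op A B) C) = tr X (mult X A C) - tr X (mult X B C)"
  unfolding tr_def mult_def minus_op_def by (simp add: sum_subtractf algebra_simps)

lemma extOp_self: "A \<in> ops X \<Longrightarrow> extOp X X A = A"
  unfolding extOp_def ops_def by (auto simp: fun_eq_iff restr_id)

lemma minus_minus_op: "minus_op (idop W) (minus_op (idop W) M) = M"
  unfolding minus_op_def by simp

lemma effects_compl: "M \<in> effects W \<Longrightarrow> minus_op (idop W) M \<in> effects W"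
  unfolding effects_def by (simp add: minus_minus_op)

lemma psd_extOp:
  assumes fX: "finite X" and WX: "W \<subseteq> X" and p: "psd W K"
  shows "psd X (extOp X W K)"
  unfolding psd_def
proof (intro conjI allI)
  show "extOp X W K \<in> ops X" by (auto simp: extOp_def ops_def)
  fix \<psi> :: vec
  have agree: "(\<forall>q\<in>X - W. jn W p c q = jn W p' c' q) \<longleftrightarrow> c = c'"
    if "c \<in> asg (X - W)" "c' \<in> asg (X - W)" for p p' c c'
    using that by (auto simp: jn_def asg_def fun_eq_iff)
  have pK: "K \<in> ops W" "\<forall>\<phi>. 0 \<le> (\<Sum>s\<in>asg W. \<Sum>t\<in>asg W. cnj (\<phi> s) * K s t * \<phi> t)" using p by (auto simp: psd_def)
  have "(\<Sum>s\<in>asg X. \<Sum>t\<in>asg X. cnj (\<psi> s) * extOp X W K s t * \<psi> t) =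
     (\<Sum>p\<in>asg W. \<Sum>c\<in>asg (X - W). \<Sum>q\<in>asg W. \<Sum>c'\<in>asg (X - W).
        if c = c' then cnj (\<psi> (jn W p c)) * K p q * \<psi> (jn W q c') else 0)"
    by (subst sum_split2[OF fX WX], intro sum.cong refl) (simp add: extOp_def jn_asg[OF _ _ WX] agree restr_jn1)
  also have "\<dots> = (\<Sum>p\<in>asg W. \<Sum>c\<in>asg (X - W). \<Sum>q\<in>asg W. cnj (\<psi> (jn W p c)) * K p q * \<psi> (jn W q c))"
    using fX by (simp add: sum.delta cong: sum.cong)
  also have "\<dots> = (\<Sum>c\<in>asg (X - W). \<Sum>p\<in>asg W. \<Sum>q\<in>asg W. cnj (\<psi> (jn W p c)) * K p q * \<psi> (jn W q c))"
    by (rule sum.swap)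
  finally show "0 \<le> (\<Sum>s\<in>asg X. \<Sum>t\<in>asg X. cnj (\<psi> s) * extOp X W K s t * \<psi> t)"
    using pK(2) by (simp add: sum_nonneg)
qed

lemma block_jn: "block V B a b = (\<lambda>u w. if u \<in> asg V \<and> w \<in> asg V then B (jn V u a) (jn V w b) else 0)"
  by (simp only: block_def jn_def)

lemma extOp_extE:
  assumes VW: "V \<subseteq> W" and WX: "W \<subseteq> X" and G0: "G (\<lambda>s t. 0) = (\<lambda>s t. 0)"
  shows "extOp X W (extE W V G A) = extE X V G (extOp X W A)"
proof (intro ext)
  fix s t
  show "extOp X W (extE W V G A) s t = extE X V G (extOp X W A) s t"
  proof (cases "s \<in> asg X \<and> t \<in> asg X")
    case False then show ?thesis by (auto simp: extOp_def extE_def)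
  next
    case st: True
    then have sW: "restr W s \<in> asg W" "restr W t \<in> asg W" by auto
    have r1: "restr (W - V) (restr W s) = restr (W - V) s" "restr (W - V) (restr W t) = restr (W - V) t"
      "restr V (restr W s) = restr V s" "restr V (restr W t) = restr V t"
      using VW by (auto simp: restr_def fun_eq_iff)
    have jX: "jn V u (restr (X - V) x) \<in> asg X" if "u \<in> asg V" for u x
      using jn_asg[OF that restr_asg] VW WX by blast
    have ag: "(\<forall>q\<in>X - W. jn V u (restr (X - V) s) q = jn V w (restr (X - V) t) q) \<longleftrightarrow> (\<forall>q\<in>X - W. s q = t q)" for u w
      using VW by (auto simp: jn_def restr_def)
    have rw: "restr W (jn V u (restr (X - V) x)) = jn V u (restr (W - V) x)" if "u \<in> asg V" for u x
      using that VW WX by (auto simp: jn_def restr_def asg_def fun_eq_iff)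
    show ?thesis
    proof (cases "\<forall>q\<in>X - W. s q = t q")
      case True
      have "block V (extOp X W A) (restr (X - V) s) (restr (X - V) t) = block V A (restr (W - V) s) (restr (W - V) t)"
        unfolding block_jn
      proof (intro ext)
        fix u w
        show "(if u \<in> asg V \<and> w \<in> asg V then extOp X W A (jn V u (restr (X - V) s)) (jn V w (restr (X - V) t)) else 0) =
          (if u \<in> asg V \<and> w \<in> asg V then A (jn V u (restr (W - V) s)) (jn V w (restr (W - V) t)) else 0)"
          unfolding extOp_def using jX ag rw True by auto
      qed
      then show ?thesis using st True sW r1 by (simp add: extOp_def extE_def)
    next
      case False
      have "block V (extOp X W A) (restr (X - V) s) (restr (X - V) t) = (\<lambda>s t. 0)"
        unfolding block_jn
      proof (intro ext)
        fix u w
        show "(if u \<in> asg V \<and> w \<in> asg V then extOp X W A (jn V u (restr (X - V) s)) (jn V w (restr (X - V) t)) else 0) = 0"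
          unfolding extOp_def using ag False by auto
      qed
      then have "extE X V G (extOp X W A) s t = 0" using st G0 by (simp add: extE_def)
      moreover have "extOp X W (extE W V G A) s t = 0" using False unfolding extOp_def by auto
      ultimately show ?thesis by simp
    qed
  qed
qed


definition adjf :: "nat set \<Rightarrow> (op \<Rightarrow> op) \<Rightarrow> op \<Rightarrow> op" where
  "adjf V E B = (\<lambda>w u. if w \<in> asg V \<and> u \<in> asg V then (\<Sum>s\<in>asg V. \<Sum>t\<in>asg V. kap E u w s t * B t s) else 0)"

lemma adjf_ops: "adjf V E B \<in> ops V" by (auto simp: adjf_def ops_def)

lemma adjf_prop:
  assumes d: "dprog V E" and fV: "finite V" and A: "A \<in> ops V"
  shows "tr V (mult V (E A) B) = tr V (mult V A (adjf V E B))"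
proof -
  have "tr V (mult V (E A) B) = (\<Sum>s\<in>asg V. \<Sum>x\<in>asg V. (\<Sum>u\<in>asg V. \<Sum>w\<in>asg V. A u w * kap E u w s x) * B x s)"
    unfolding tr_def mult_def by (subst lin_expand[OF d fV A]) (rule refl)
  also have "\<dots> = (\<Sum>s\<in>asg V. \<Sum>x\<in>asg V. \<Sum>u\<in>asg V. \<Sum>w\<in>asg V. A u w * (kap E u w s x * B x s))"
    by (simp add: sum_distrib_right sum_distrib_left mult_ac)
  also have "\<dots> = (\<Sum>u\<in>asg V. \<Sum>w\<in>asg V. \<Sum>s\<in>asg V. \<Sum>x\<in>asg V. A u w * (kap E u w s x * B x s))"
    by (rule swap4)
  also have "\<dots> = tr V (mult V A (adjf V E B))"
    unfolding tr_def mult_def adjf_def by (simp add: sum_distrib_left)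
  finally show ?thesis .
qed

lemma tr_unitop:
  assumes "finite V" "u \<in> asg V" "w \<in> asg V"
  shows "tr V (mult V (unitop u w) C) = C w u"
proof -
  have "tr V (mult V (unitop u w) C) = (\<Sum>s\<in>asg V. if s = u then C w s else 0)"
    unfolding tr_def mult_def unitop_def
    by (intro sum.cong refl) (simp add: if_distrib if_distribR assms sum.delta cong: if_cong)
  also have "\<dots> = C w u" using assms by (simp add: sum.delta)
  finally show ?thesis .
qed

lemma adjoint_eq:
  assumes d: "dprog V E" and fV: "finite V" and B: "B \<in> ops V"
  shows "adjoint V E B = adjf V E B"
proof -
  let ?P = "\<lambda>F. (\<forall>B\<in>ops V. F B \<in> ops V) \<and>
     (\<forall>A\<in>ops V. \<forall>B\<in>ops V. tr V (mult V (E A) B) = tr V (mult V A (F B)))"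
  have Pa: "?P (adjf V E)" using adjf_ops adjf_prop[OF d fV] by blast
  have Pad: "?P (adjoint V E)" unfolding adjoint_def by (rule someI[of ?P, OF Pa])
  show ?thesis
  proof (intro ext)
    fix w u
    show "adjoint V E B w u = adjf V E B w u"
    proof (cases "w \<in> asg V \<and> u \<in> asg V")
      case True
      then have uo: "unitop u w \<in> ops V" by (simp add: unitop_ops)
      have "adjoint V E B w u = tr V (mult V (unitop u w) (adjoint V E B))"
        using True fV by (simp add: tr_unitop)
      also have "\<dots> = tr V (mult V (E (unitop u w)) B)" using Pad uo B by simp
      also have "\<dots> = tr V (mult V (unitop u w) (adjf V E B))" using Pa uo B by simp
      also have "\<dots> = adjf V E B w u" using True fV by (simp add: tr_unitop)
      finally show ?thesis .
    next
      case False
      have "adjoint V E B \<in> ops V" using Pad B by blast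
      then show ?thesis using False by (auto simp: ops_def adjf_def)
    qed
  qed
qed

lemma adjoint_zero:
  assumes d: "dprog V E" and fV: "finite V"
  shows "adjoint V E (\<lambda>s t. 0) = (\<lambda>s t. 0)"
  using adjoint_eq[OF d fV, of "\<lambda>s t. 0"] by (simp add: ops_def adjf_def fun_eq_iff)

lemma extE_adj:
  assumes d: "dprog V E" and fV: "finite V"
  shows "extE X V (adjoint V E) B s t = (if s \<in> asg X \<and> t \<in> asg X then
     (\<Sum>s'\<in>asg V. \<Sum>t'\<in>asg V. kap E (restr V t) (restr V s) s' t' * B (jn V t' (restr (X - V) s)) (jn V s' (restr (X - V) t)))
     else 0)"
proof -
  have "adjoint V E (block V B a b) x y = (\<Sum>s'\<in>asg V. \<Sum>t'\<in>asg V. kap E y x s' t' * B (jn V t' a) (jn V s' b))"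
    if "x \<in> asg V" "y \<in> asg V" for a b x y
  proof -
    have "adjoint V E (block V B a b) x y = (\<Sum>s'\<in>asg V. \<Sum>t'\<in>asg V. kap E y x s' t' * block V B a b t' s')"
      using that by (simp add: adjoint_eq[OF d fV block_ops] adjf_def)
    also have "\<dots> = (\<Sum>s'\<in>asg V. \<Sum>t'\<in>asg V. kap E y x s' t' * B (jn V t' a) (jn V s' b))"
      by (intro sum.cong refl) (simp add: block_jn)
    finally show ?thesis .
  qed
  then show ?thesis unfolding extE_def by simp
qed

lemma reord6: "(\<Sum>x\<in>P. \<Sum>a\<in>A. \<Sum>y\<in>P. \<Sum>b\<in>A. \<Sum>z\<in>P. \<Sum>w\<in>P. F x a y b z w) =
   (\<Sum>x\<in>P. \<Sum>y\<in>P. \<Sum>z\<in>P. \<Sum>w\<in>P. \<Sum>a\<in>A. \<Sum>b\<in>A. (F x a y b z w :: complex))"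
proof -
  have "(\<Sum>x\<in>P. \<Sum>a\<in>A. \<Sum>y\<in>P. \<Sum>b\<in>A. \<Sum>z\<in>P. \<Sum>w\<in>P. F x a y b z w) =
     (\<Sum>x\<in>P. \<Sum>y\<in>P. \<Sum>a\<in>A. \<Sum>b\<in>A. \<Sum>z\<in>P. \<Sum>w\<in>P. F x a y b z w)"
    by (rule sum.cong[OF refl], rule sum.swap)
  also have "\<dots> = (\<Sum>x\<in>P. \<Sum>y\<in>P. \<Sum>z\<in>P. \<Sum>w\<in>P. \<Sum>a\<in>A. \<Sum>b\<in>A. F x a y b z w)"
    by (rule sum.cong[OF refl], rule sum.cong[OF refl], rule swap4)
  finally show ?thesis .
qed

lemma duality:
  assumes d: "dprog V E" and fX: "finite X" and VX: "V \<subseteq> X"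
  shows "tr X (mult X (extE X V (adjoint V E) B) \<rho>) = tr X (mult X B (extE X V E \<rho>))"
proof -
  have fV: "finite V" using fX VX finite_subset by blast
  let ?R = "X - V"
  let ?C = "\<lambda>i j k l a b. kap E i j k l * (B (jn V l a) (jn V k b) * \<rho> (jn V i b) (jn V j a))"
  have "tr X (mult X (extE X V (adjoint V E) B) \<rho>) = (\<Sum>s\<in>asg X. \<Sum>t\<in>asg X.
      (\<Sum>s'\<in>asg V. \<Sum>t'\<in>asg V. kap E (restr V t) (restr V s) s' t' * B (jn V t' (restr ?R s)) (jn V s' (restr ?R t))) * \<rho> t s)"
    unfolding tr_def mult_def by (intro sum.cong refl) (simp add: extE_adj[OF d fV])
  also have "\<dots> = (\<Sum>j\<in>asg V. \<Sum>a\<in>asg ?R. \<Sum>i\<in>asg V. \<Sum>b\<in>asg ?R.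
      (\<Sum>k\<in>asg V. \<Sum>l\<in>asg V. kap E i j k l * B (jn V l a) (jn V k b)) * \<rho> (jn V i b) (jn V j a))"
    by (subst sum_split2[OF fX VX], intro sum.cong refl) (simp add: restr_jn1 restr_jn2)
  also have "\<dots> = (\<Sum>j\<in>asg V. \<Sum>a\<in>asg ?R. \<Sum>i\<in>asg V. \<Sum>b\<in>asg ?R. \<Sum>k\<in>asg V. \<Sum>l\<in>asg V. ?C i j k l a b)"
    by (simp add: sum_distrib_right sum_distrib_left mult_ac)
  also have "\<dots> = (\<Sum>j\<in>asg V. \<Sum>i\<in>asg V. \<Sum>k\<in>asg V. \<Sum>l\<in>asg V. \<Sum>a\<in>asg ?R. \<Sum>b\<in>asg ?R. ?C i j k l a b)"
    by (rule reord6)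
  also have "\<dots> = (\<Sum>i\<in>asg V. \<Sum>j\<in>asg V. \<Sum>k\<in>asg V. \<Sum>l\<in>asg V. \<Sum>a\<in>asg ?R. \<Sum>b\<in>asg ?R. ?C i j k l a b)"
    by (rule sum.swap)
  finally have L: "tr X (mult X (extE X V (adjoint V E) B) \<rho>) =
     (\<Sum>i\<in>asg V. \<Sum>j\<in>asg V. \<Sum>k\<in>asg V. \<Sum>l\<in>asg V. \<Sum>a\<in>asg ?R. \<Sum>b\<in>asg ?R. ?C i j k l a b)" .
  have "tr X (mult X B (extE X V E \<rho>)) = (\<Sum>s\<in>asg X. \<Sum>t\<in>asg X. B s t *
      (\<Sum>u\<in>asg V. \<Sum>w\<in>asg V. \<rho> (jn V u (restr ?R t)) (jn V w (restr ?R s)) * kap E u w (restr V t) (restr V s)))"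
    unfolding tr_def mult_def by (intro sum.cong refl) (simp add: extE_kap[OF d fV])
  also have "\<dots> = (\<Sum>l\<in>asg V. \<Sum>a\<in>asg ?R. \<Sum>k\<in>asg V. \<Sum>b\<in>asg ?R. B (jn V l a) (jn V k b) *
      (\<Sum>i\<in>asg V. \<Sum>j\<in>asg V. \<rho> (jn V i b) (jn V j a) * kap E i j k l))"
    by (subst sum_split2[OF fX VX], intro sum.cong refl) (simp add: restr_jn1 restr_jn2)
  also have "\<dots> = (\<Sum>l\<in>asg V. \<Sum>a\<in>asg ?R. \<Sum>k\<in>asg V. \<Sum>b\<in>asg ?R. \<Sum>i\<in>asg V. \<Sum>j\<in>asg V. ?C i j k l a b)"
    by (simp add: sum_distrib_left sum_distrib_right mult_ac)
  also have "\<dots> = (\<Sum>l\<in>asg V. \<Sum>k\<in>asg V. \<Sum>i\<in>asg V. \<Sum>j\<in>asg V. \<Sum>a\<in>asg ?R. \<Sum>b\<in>asg ?R. ?C i j k l a b)"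
    by (rule reord6)
  also have "\<dots> = (\<Sum>i\<in>asg V. \<Sum>j\<in>asg V. \<Sum>l\<in>asg V. \<Sum>k\<in>asg V. \<Sum>a\<in>asg ?R. \<Sum>b\<in>asg ?R. ?C i j k l a b)"
    by (rule swap4)
  also have "\<dots> = (\<Sum>i\<in>asg V. \<Sum>j\<in>asg V. \<Sum>k\<in>asg V. \<Sum>l\<in>asg V. \<Sum>a\<in>asg ?R. \<Sum>b\<in>asg ?R. ?C i j k l a b)"
    by (rule sum.cong[OF refl], rule sum.cong[OF refl], rule sum.swap)
  finally show ?thesis using L by simp
qed


lemma CI:
  assumes d: "dprog V E" and fX: "finite X" and VW: "V \<subseteq> W" and WX: "W \<subseteq> X"
  shows "tr X (mult X (extOp X W (extE W V (adjoint V E) M)) \<rho>) = tr X (mult X (extOp X W M) (extE X V E \<rho>))"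
proof -
  have VX: "V \<subseteq> X" using VW WX by (rule subset_trans)
  have fV: "finite V" using fX VX by (rule finite_subset[rotated])
  have e: "extOp X W (extE W V (adjoint V E) M) = extE X V (adjoint V E) (extOp X W M)"
    by (rule extOp_extE[where G="adjoint V E", OF VW WX adjoint_zero[OF d fV]])
  show ?thesis unfolding e by (rule duality[OF d fX VX])
qed

lemma sum_single:
  assumes "finite S" "a \<in> S" "\<And>c. c \<in> S \<Longrightarrow> c \<noteq> a \<Longrightarrow> f c = 0"
  shows "sum f S = (f a :: complex)"
proof -
  have "sum f S = f a + sum f (S - {a})" using assms by (simp add: sum.remove)
  also have "sum f (S - {a}) = 0" using assms by (intro sum.neutral) auto
  finally show ?thesis by simp
qed

lemma psd_block:
  assumes fX: "finite X" and VX: "V \<subseteq> X" and p: "psd X \<rho>" and a: "a \<in> asg (X - V)"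
  shows "psd V (block V \<rho> a a)"
  unfolding psd_def
proof (intro conjI allI)
  show "block V \<rho> a a \<in> ops V" by (rule block_ops)
  fix \<phi> :: vec
  define \<psi> where "\<psi> = (\<lambda>s. if restr (X - V) s = a then \<phi> (restr V s) else 0)"
  have fR: "finite (asg (X - V))" using fX by simp
  have "(\<Sum>s\<in>asg X. \<Sum>t\<in>asg X. cnj (\<psi> s) * \<rho> s t * \<psi> t) =
     (\<Sum>p\<in>asg V. \<Sum>c\<in>asg (X - V). \<Sum>q\<in>asg V. \<Sum>e\<in>asg (X - V).
        cnj (if c = a then \<phi> p else 0) * \<rho> (jn V p c) (jn V q e) * (if e = a then \<phi> q else 0))"
    by (subst sum_split2[OF fX VX], intro sum.cong refl) (simp add: \<psi>_def restr_jn1 restr_jn2)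
  also have "\<dots> = (\<Sum>p\<in>asg V. \<Sum>c\<in>asg (X - V). \<Sum>q\<in>asg V.
        cnj (if c = a then \<phi> p else 0) * \<rho> (jn V p c) (jn V q a) * \<phi> q)"
    apply (rule sum.cong[OF refl], rule sum.cong[OF refl], rule sum.cong[OF refl])
    apply (subst sum_single[OF fR a])
    apply auto
    done
  also have "\<dots> = (\<Sum>p\<in>asg V. \<Sum>q\<in>asg V. cnj (\<phi> p) * \<rho> (jn V p a) (jn V q a) * \<phi> q)"
    by (rule sum.cong[OF refl], subst sum_single[OF fR a]) auto
  also have "\<dots> = (\<Sum>p\<in>asg V. \<Sum>q\<in>asg V. cnj (\<phi> p) * block V \<rho> a a p q * \<phi> q)"
    by (intro sum.cong refl) (simp add: block_jn)
  finally have eq: "(\<Sum>s\<in>asg X. \<Sum>t\<in>asg X. cnj (\<psi> s) * \<rho> s t * \<psi> t) =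
     (\<Sum>p\<in>asg V. \<Sum>q\<in>asg V. cnj (\<phi> p) * block V \<rho> a a p q * \<phi> q)" .
  have "0 \<le> (\<Sum>s\<in>asg X. \<Sum>t\<in>asg X. cnj (\<psi> s) * \<rho> s t * \<psi> t)"
    using p unfolding psd_def by blast
  then show "0 \<le> (\<Sum>s\<in>asg V. \<Sum>t\<in>asg V. cnj (\<phi> s) * block V \<rho> a a s t * \<phi> t)"
    unfolding eq .
qed

lemma tr_extE_le:
  assumes d: "dprog V E" and fX: "finite X" and VX: "V \<subseteq> X" and p: "psd X \<rho>"
  shows "Re (tr X (extE X V E \<rho>)) \<le> Re (tr X \<rho>)"
proof -
  have e: "extE X V E \<rho> (jn V p a) (jn V p a) = E (block V \<rho> a a) p p" if "p \<in> asg V" "a \<in> asg (X - V)" for p a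
    using that jn_asg[OF that VX] by (simp add: extE_def restr_jn1 restr_jn2)
  have "tr X (extE X V E \<rho>) = (\<Sum>p\<in>asg V. \<Sum>a\<in>asg (X - V). extE X V E \<rho> (jn V p a) (jn V p a))"
    unfolding tr_def by (rule sum_split[OF fX VX])
  also have "\<dots> = (\<Sum>p\<in>asg V. \<Sum>a\<in>asg (X - V). E (block V \<rho> a a) p p)"
    by (intro sum.cong refl) (simp add: e)
  also have "\<dots> = (\<Sum>a\<in>asg (X - V). tr V (E (block V \<rho> a a)))"
    unfolding tr_def by (rule sum.swap)
  finally have 1: "tr X (extE X V E \<rho>) = (\<Sum>a\<in>asg (X - V). tr V (E (block V \<rho> a a)))" .
  have "tr X \<rho> = (\<Sum>p\<in>asg V. \<Sum>a\<in>asg (X - V). \<rho> (jn V p a) (jn V p a))"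
    unfolding tr_def by (rule sum_split[OF fX VX])
  also have "\<dots> = (\<Sum>p\<in>asg V. \<Sum>a\<in>asg (X - V). block V \<rho> a a p p)"
    by (intro sum.cong refl) (simp add: block_jn)
  also have "\<dots> = (\<Sum>a\<in>asg (X - V). tr V (block V \<rho> a a))"
    unfolding tr_def by (rule sum.swap)
  finally have 2: "tr X \<rho> = (\<Sum>a\<in>asg (X - V). tr V (block V \<rho> a a))" .
  show ?thesis unfolding 1 2 Re_sum
    by (intro sum_mono dprog_tr[OF d] psd_block[OF fX VX p])
qed

lemma tr_psd_nonneg:
  assumes fX: "finite X" and pA: "psd X A" and pB: "psd X B"
  shows "0 \<le> tr X (mult X A B)"
proof -
  obtain m :: nat and v where A: "\<forall>s\<in>asg X. \<forall>t\<in>asg X. A s t = (\<Sum>k<m. v k s * cnj (v k t))"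
    using chol_idx[OF finite_asg[OF fX] psd_pform[OF pA]] by blast
  have "\<forall>k. 0 \<le> qf (asg X) B (v k)" using pB by (simp add: psd_def qf_def)
  then show ?thesis unfolding tr_mult_decomp[OF A] by (simp add: sum_nonneg)
qed

lemma tr_outer: "tr X (mult X (outer w) P) = qf (asg X) P w"
proof -
  have "tr X (mult X (outer w) P) = (\<Sum>s\<in>asg X. \<Sum>u\<in>asg X. cnj (w u) * P u s * w s)"
    unfolding tr_def mult_def outer_def by (simp add: mult_ac)
  also have "\<dots> = (\<Sum>u\<in>asg X. \<Sum>s\<in>asg X. cnj (w u) * P u s * w s)" by (rule sum.swap)
  finally show ?thesis by (simp add: qf_def)
qed

lemma tr_mult_outer_right: "tr X (mult X A (outer \<psi>)) = qf (asg X) A \<psi>"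
proof -
  have "tr X (mult X A (outer \<psi>)) = (\<Sum>s\<in>asg X. \<Sum>u\<in>asg X. cnj (\<psi> s) * A s u * \<psi> u)"
    unfolding tr_def mult_def outer_def by (simp add: mult_ac)
  then show ?thesis by (simp add: qf_def)
qed


locale omsetup =
  fixes V V' :: "nat set" and b1 b2 :: "nat \<Rightarrow> vec"
  assumes fV: "finite V" and cV: "card V' = card V" and fV': "finite V'" and disj: "V \<inter> V' = {}"
    and on1: "onb V b1" and on2: "onb V' b2"
begin

abbreviation "dd \<equiv> (2::nat) ^ card V"
abbreviation "W0 \<equiv> V \<union> V'"

lemma W0_minus: "W0 - V = V'" using disj by blast
lemma fW0: "finite W0" using fV fV' by simp
lemma VW0: "V \<subseteq> W0" by simp

lemma card_asgV: "card (asg V) = dd" using card_asg[OF fV] .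

lemma orth1: "i < dd \<Longrightarrow> j < dd \<Longrightarrow> (\<Sum>s\<in>asg V. cnj (b1 i s) * b1 j s) = (if i = j then 1 else 0)"
  using on1 by (simp add: onb_def)

lemma orth2: "i < dd \<Longrightarrow> j < dd \<Longrightarrow> (\<Sum>s\<in>asg V'. cnj (b2 i s) * b2 j s) = (if i = j then 1 else 0)"
  using on2 cV by (simp add: onb_def)

lemma omega_jn:
  assumes p: "p \<in> asg V" and a: "a \<in> asg V'"
  shows "omega_vec V V' b1 b2 (jn V p a) = (\<Sum>i<dd. b1 i p * b2 i a) / complex_of_real (sqrt dd)"
proof -
  have a': "a \<in> asg (W0 - V)" using a W0_minus by simp
  have m: "jn V p a \<in> asg W0" by (rule jn_asg[OF p a' VW0])
  have r1: "restr V (jn V p a) = p" by (rule restr_jn1[OF p])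
  have r2: "restr V' (jn V p a) = a" using restr_jn2[OF a', of p] W0_minus by simp
  show ?thesis unfolding omega_vec_def using m r1 r2 by simp
qed

lemma omega_zero: "s \<notin> asg W0 \<Longrightarrow> omega_vec V V' b1 b2 s = 0"
  by (simp add: omega_vec_def)

lemma sqdd: "complex_of_real (sqrt (2 ^ card V)) * complex_of_real (sqrt (2 ^ card V)) = 2 ^ card V"
  by (simp flip: of_real_mult)

lemma sqdd_cnj: "cnj (complex_of_real (sqrt dd)) = complex_of_real (sqrt dd)" by simp

lemma sqdd_nz: "complex_of_real (sqrt dd) \<noteq> 0" by simp

lemma omega_norm: "(\<Sum>s\<in>asg W0. cnj (omega_vec V V' b1 b2 s) * omega_vec V V' b1 b2 s) = 1"
proof -
  let ?w = "omega_vec V V' b1 b2"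
  let ?q = "complex_of_real (sqrt dd)"
  have "(\<Sum>s\<in>asg W0. cnj (?w s) * ?w s) = (\<Sum>p\<in>asg V. \<Sum>a\<in>asg V'. cnj (?w (jn V p a)) * ?w (jn V p a))"
    using sum_split[OF fW0 VW0, of "\<lambda>s. cnj (?w s) * ?w s"] W0_minus by simp
  also have "\<dots> = (\<Sum>p\<in>asg V. \<Sum>a\<in>asg V'. (\<Sum>i<dd. \<Sum>j<dd. (cnj (b1 i p) * b1 j p) * (cnj (b2 i a) * b2 j a)) / of_nat dd)"
    apply (intro sum.cong refl)
    apply (simp add: omega_jn sqdd_cnj)
    apply (simp add: sum_distrib_left sum_distrib_right mult_ac sqdd flip: sum_divide_distrib)
    done
  also have "\<dots> = (\<Sum>i<dd. \<Sum>j<dd. (\<Sum>p\<in>asg V. cnj (b1 i p) * b1 j p) * (\<Sum>a\<in>asg V'. cnj (b2 i a) * b2 j a)) / of_nat dd"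
  proof -
    have "(\<Sum>p\<in>asg V. \<Sum>a\<in>asg V'. (\<Sum>i<dd. \<Sum>j<dd. (cnj (b1 i p) * b1 j p) * (cnj (b2 i a) * b2 j a)) / of_nat dd)
      = (\<Sum>p\<in>asg V. \<Sum>a\<in>asg V'. \<Sum>i<dd. \<Sum>j<dd. (cnj (b1 i p) * b1 j p) * (cnj (b2 i a) * b2 j a)) / of_nat dd"
      by (simp add: sum_divide_distrib)
    also have "(\<Sum>p\<in>asg V. \<Sum>a\<in>asg V'. \<Sum>i<dd. \<Sum>j<dd. (cnj (b1 i p) * b1 j p) * (cnj (b2 i a) * b2 j a))
      = (\<Sum>i<dd. \<Sum>j<dd. \<Sum>p\<in>asg V. \<Sum>a\<in>asg V'. (cnj (b1 i p) * b1 j p) * (cnj (b2 i a) * b2 j a))"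
      by (rule swap4)
    also have "\<dots> = (\<Sum>i<dd. \<Sum>j<dd. (\<Sum>p\<in>asg V. cnj (b1 i p) * b1 j p) * (\<Sum>a\<in>asg V'. cnj (b2 i a) * b2 j a))"
      by (simp add: sum_product)
    finally show ?thesis .
  qed
  also have "\<dots> = (\<Sum>i<dd. \<Sum>j<dd. (if i = j then 1 else 0)) / of_nat dd"
    by (intro arg_cong2[where f="(/)"] sum.cong refl) (simp add: orth1 orth2)
  also have "\<dots> = 1" by simp
  finally show ?thesis .
qed

lemma complete1:
  assumes p0: "p0 \<in> asg V" and p1: "p1 \<in> asg V"
  shows "(\<Sum>i<dd. b1 i p0 * cnj (b1 i p1)) = (if p0 = p1 then 1 else 0)"
proof -
  define P where "P = (\<lambda>p p'. \<Sum>i<dd. b1 i p * cnj (b1 i p'))"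
  define Q where "Q = (\<lambda>p p'. (if p = p' then 1 else 0) - P p p')"
  have fA: "finite (asg V)" using fV by simp
  have Ph: "P p' p = cnj (P p p')" for p p' unfolding P_def by (simp add: mult.commute)
  have Qh: "Q p' p = cnj (Q p p')" for p p' unfolding Q_def by (subst Ph) auto
  have trP: "(\<Sum>p\<in>asg V. P p p) = of_nat dd"
  proof -
    have "(\<Sum>p\<in>asg V. P p p) = (\<Sum>i<dd. \<Sum>p\<in>asg V. cnj (b1 i p) * b1 i p)"
      unfolding P_def by (subst sum.swap) (simp add: mult.commute)
    also have "\<dots> = (\<Sum>i<dd. 1)" by (intro sum.cong refl) (simp add: orth1)
    finally show ?thesis by simp
  qed
  have PP: "(\<Sum>p\<in>asg V. \<Sum>p'\<in>asg V. P p p' * P p' p) = of_nat dd"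
  proof -
    have "(\<Sum>p\<in>asg V. \<Sum>p'\<in>asg V. P p p' * P p' p) =
       (\<Sum>p\<in>asg V. \<Sum>p'\<in>asg V. \<Sum>i<dd. \<Sum>j<dd. (cnj (b1 i p) * b1 j p) * (cnj (b1 j p') * b1 i p'))"
      unfolding P_def by (simp add: sum_distrib_left sum_distrib_right mult_ac)
    also have "\<dots> = (\<Sum>i<dd. \<Sum>j<dd. \<Sum>p\<in>asg V. \<Sum>p'\<in>asg V. (cnj (b1 i p) * b1 j p) * (cnj (b1 j p') * b1 i p'))"
      by (rule swap4)
    also have "\<dots> = (\<Sum>i<dd. \<Sum>j<dd. (\<Sum>p\<in>asg V. cnj (b1 i p) * b1 j p) * (\<Sum>p'\<in>asg V. cnj (b1 j p') * b1 i p'))"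
      by (simp add: sum_product)
    also have "\<dots> = (\<Sum>i<dd. \<Sum>j<dd. (if i = j then 1 else 0))"
      by (intro sum.cong refl) (auto simp: orth1)
    finally show ?thesis by simp
  qed
  have d1: "(\<Sum>p\<in>asg V. \<Sum>p'\<in>asg V. (if p = p' then 1 else 0) * (if p' = p then 1 else 0)) = (of_nat dd :: complex)"
  proof -
    have "(\<Sum>p\<in>asg V. \<Sum>p'\<in>asg V. (if p = p' then 1 else 0) * (if p' = p then 1 else (0::complex))) = (\<Sum>p\<in>asg V. 1)"
      by (intro sum.cong refl) (simp add: fA if_distrib if_distribR sum.delta cong: if_cong)
    then show ?thesis by (simp add: card_asgV)
  qed
  have d2: "(\<Sum>p\<in>asg V. \<Sum>p'\<in>asg V. (if p = p' then 1 else 0) * P p' p) = of_nat dd"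
  proof -
    have "(\<Sum>p\<in>asg V. \<Sum>p'\<in>asg V. (if p = p' then 1 else 0) * P p' p) = (\<Sum>p\<in>asg V. P p p)"
      by (intro sum.cong refl) (simp add: fA if_distrib if_distribR sum.delta cong: if_cong)
    then show ?thesis using trP by simp
  qed
  have d3: "(\<Sum>p\<in>asg V. \<Sum>p'\<in>asg V. P p p' * (if p' = p then 1 else 0)) = of_nat dd"
  proof -
    have "(\<Sum>p\<in>asg V. \<Sum>p'\<in>asg V. P p p' * (if p' = p then 1 else 0)) = (\<Sum>p\<in>asg V. P p p)"
      by (intro sum.cong refl) (simp add: fA if_distrib if_distribR sum.delta' cong: if_cong)
    then show ?thesis using trP by simp
  qed
  have "(\<Sum>p\<in>asg V. \<Sum>p'\<in>asg V. Q p p' * Q p' p) =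
     (\<Sum>p\<in>asg V. \<Sum>p'\<in>asg V. (if p = p' then 1 else 0) * (if p' = p then 1 else 0))
     - (\<Sum>p\<in>asg V. \<Sum>p'\<in>asg V. (if p = p' then 1 else 0) * P p' p)
     - (\<Sum>p\<in>asg V. \<Sum>p'\<in>asg V. P p p' * (if p' = p then 1 else 0))
     + (\<Sum>p\<in>asg V. \<Sum>p'\<in>asg V. P p p' * P p' p)"
    unfolding Q_def by (simp add: algebra_simps sum_subtractf sum.distrib)
  also have "\<dots> = 0" using d1 d2 d3 PP by simp
  finally have "(\<Sum>p\<in>asg V. \<Sum>p'\<in>asg V. Q p p' * cnj (Q p p')) = 0" by (subst (asm) Qh)
  then have "(\<Sum>p\<in>asg V. \<Sum>p'\<in>asg V. complex_of_real ((cmod (Q p p'))^2)) = 0"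
    by (simp only: complex_norm_square)
  moreover have "complex_of_real (\<Sum>p\<in>asg V. \<Sum>p'\<in>asg V. (cmod (Q p p'))^2) =
      (\<Sum>p\<in>asg V. \<Sum>p'\<in>asg V. complex_of_real ((cmod (Q p p'))^2))"
    by simp
  ultimately have "(\<Sum>p\<in>asg V. \<Sum>p'\<in>asg V. (cmod (Q p p'))^2) = 0"
    by (simp only: of_real_eq_0_iff)
  then have "\<forall>p\<in>asg V. (\<Sum>p'\<in>asg V. (cmod (Q p p'))^2) = 0"
    using fA by (subst (asm) sum_nonneg_eq_0_iff) (auto intro: sum_nonneg)
  then have "(cmod (Q p0 p1))^2 = 0" using p0 p1 fA by (simp add: sum_nonneg_eq_0_iff)
  then have "Q p0 p1 = 0" by simp
  then show ?thesis unfolding Q_def P_def by (simp split: if_splits)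
qed

lemma Omega_outer: "Omega V V' b1 b2 = outer (omega_vec V V' b1 b2)"
  by (simp add: Omega_def outer_def)

lemma psd_Omega: "psd W0 (Omega V V' b1 b2)"
  unfolding Omega_outer by (rule psd_outer) (simp add: omega_zero)

lemma psd_IOmega: "psd W0 (minus_op (idop W0) (Omega V V' b1 b2))"
  unfolding psd_def
proof (intro conjI allI)
  let ?w = "omega_vec V V' b1 b2"
  show "minus_op (idop W0) (Omega V V' b1 b2) \<in> ops W0"
    by (auto simp: ops_def minus_op_def idop_def Omega_def omega_zero)
  fix \<psi> :: vec
  define \<beta> where "\<beta> = (\<Sum>t\<in>asg W0. cnj (?w t) * \<psi> t)"
  have fA: "finite (asg W0)" using fW0 by simp
  have cb: "(\<Sum>s\<in>asg W0. cnj (\<psi> s) * ?w s) = cnj \<beta>" unfolding \<beta>_def by (simp add: mult.commute)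
  have id1: "(\<Sum>s\<in>asg W0. \<Sum>t\<in>asg W0. cnj (\<psi> s) * idop W0 s t * \<psi> t) = (\<Sum>s\<in>asg W0. cnj (\<psi> s) * \<psi> s)"
  proof (rule sum.cong[OF refl])
    fix s assume s: "s \<in> asg W0"
    have "(\<Sum>t\<in>asg W0. cnj (\<psi> s) * idop W0 s t * \<psi> t) = (\<Sum>t\<in>asg W0. if t = s then cnj (\<psi> s) * \<psi> t else 0)"
      using s by (intro sum.cong refl) (auto simp: idop_def)
    also have "\<dots> = cnj (\<psi> s) * \<psi> s" using s fA by (simp add: sum.delta)
    finally show "(\<Sum>t\<in>asg W0. cnj (\<psi> s) * idop W0 s t * \<psi> t) = cnj (\<psi> s) * \<psi> s" .
  qed
  have om1: "(\<Sum>s\<in>asg W0. \<Sum>t\<in>asg W0. cnj (\<psi> s) * Omega V V' b1 b2 s t * \<psi> t) = cnj \<beta> * \<beta>"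
    unfolding Omega_def cb[symmetric] \<beta>_def by (simp add: sum_distrib_left sum_distrib_right mult_ac)
  have "(\<Sum>s\<in>asg W0. \<Sum>t\<in>asg W0. cnj (\<psi> s) * minus_op (idop W0) (Omega V V' b1 b2) s t * \<psi> t)
      = (\<Sum>s\<in>asg W0. \<Sum>t\<in>asg W0. cnj (\<psi> s) * idop W0 s t * \<psi> t)
        - (\<Sum>s\<in>asg W0. \<Sum>t\<in>asg W0. cnj (\<psi> s) * Omega V V' b1 b2 s t * \<psi> t)"
    unfolding minus_op_def by (simp add: algebra_simps sum_subtractf)
  also have "\<dots> = (\<Sum>s\<in>asg W0. cnj (\<psi> s) * \<psi> s) - cnj \<beta> * \<beta>" unfolding id1 om1 ..
  also have "\<dots> = (\<Sum>s\<in>asg W0. cnj (\<psi> s - \<beta> * ?w s) * (\<psi> s - \<beta> * ?w s))"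
  proof -
    have "(\<Sum>s\<in>asg W0. cnj (\<psi> s - \<beta> * ?w s) * (\<psi> s - \<beta> * ?w s)) =
       (\<Sum>s\<in>asg W0. cnj (\<psi> s) * \<psi> s) - \<beta> * (\<Sum>s\<in>asg W0. cnj (\<psi> s) * ?w s)
       - cnj \<beta> * (\<Sum>s\<in>asg W0. cnj (?w s) * \<psi> s) + cnj \<beta> * \<beta> * (\<Sum>s\<in>asg W0. cnj (?w s) * ?w s)"
      by (simp add: algebra_simps sum_subtractf sum.distrib sum_distrib_left)
    also have "\<dots> = (\<Sum>s\<in>asg W0. cnj (\<psi> s) * \<psi> s) - cnj \<beta> * \<beta>"
      unfolding cb omega_norm \<beta>_def[symmetric] by simp
    finally show ?thesis by simp
  qed
  finally have eq: "(\<Sum>s\<in>asg W0. \<Sum>t\<in>asg W0. cnj (\<psi> s) * minus_op (idop W0) (Omega V V' b1 b2) s t * \<psi> t) =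
     (\<Sum>s\<in>asg W0. cnj (\<psi> s - \<beta> * ?w s) * (\<psi> s - \<beta> * ?w s))" .
  have "0 \<le> (\<Sum>s\<in>asg W0. cnj (\<psi> s - \<beta> * ?w s) * (\<psi> s - \<beta> * ?w s))"
    by (rule sum_nonneg) (rule cnj_mult_self_nonneg)
  then show "0 \<le> (\<Sum>s\<in>asg W0. \<Sum>t\<in>asg W0. cnj (\<psi> s) * minus_op (idop W0) (Omega V V' b1 b2) s t * \<psi> t)"
    unfolding eq .
qed

end


lemma nsq: "(complex_of_real (cmod z))^2 = z * cnj z"
  using complex_norm_square[of z] by simp

lemma Phi_cong:
  assumes "\<And>p u. p \<in> asg V \<Longrightarrow> u \<in> asg V \<Longrightarrow> G1 p u = G2 p u"
  shows "Phi V D G1 = Phi V D G2"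
  unfolding Phi_def using assms by (intro sum.cong refl) simp

lemma Phi_scale:
  "Phi V D (\<lambda>p u. complex_of_real k * G p u) = complex_of_real (k * k) * Phi V D G"
  unfolding Phi_def by (simp add: sum_distrib_left mult_ac)

context omsetup
begin

lemma restrs_jn:
  assumes p: "p \<in> asg V" and a: "a \<in> asg V'"
  shows "jn V p a \<in> asg W0" "restr V (jn V p a) = p" "restr V' (jn V p a) = a"
proof -
  have a': "a \<in> asg (W0 - V)" using a W0_minus by simp
  show "jn V p a \<in> asg W0" by (rule jn_asg[OF p a' VW0])
  show "restr V (jn V p a) = p" by (rule restr_jn1[OF p])
  show "restr V' (jn V p a) = a" using restr_jn2[OF a', of p] W0_minus by simp
qed

lemma Gm_omega:
  fixes G :: "asgn \<Rightarrow> asgn \<Rightarrow> complex" and c :: real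
  assumes p: "p \<in> asg V" and u: "u \<in> asg V"
  defines "z \<equiv> (\<lambda>i u. \<Sum>p'\<in>asg V. b1 i p' * G p' u)"
  defines "y \<equiv> (\<lambda>s. if s \<in> asg W0 then complex_of_real c * (\<Sum>j<dd. z j (restr V s) * b2 j (restr V' s)) else 0)"
  shows "Gm W0 V (omega_vec V V' b1 b2) y p u = complex_of_real (c / sqrt dd) * G p u"
proof -
  let ?q = "complex_of_real (sqrt dd)"
  have "Gm W0 V (omega_vec V V' b1 b2) y p u =
     (\<Sum>a\<in>asg V'. cnj ((\<Sum>i<dd. b1 i p * b2 i a) / ?q) * (complex_of_real c * (\<Sum>j<dd. z j u * b2 j a)))"
    unfolding Gm_def W0_minus using p u
    by (intro sum.cong refl) (simp add: omega_jn y_def restrs_jn)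
  also have "\<dots> = (\<Sum>a\<in>asg V'. \<Sum>j<dd. \<Sum>i<dd. (complex_of_real c / ?q) * (cnj (b1 i p) * z j u * (cnj (b2 i a) * b2 j a)))"
    by (simp add: sum_distrib_left sum_distrib_right mult_ac flip: sum_divide_distrib)
  also have "\<dots> = (\<Sum>j<dd. \<Sum>a\<in>asg V'. \<Sum>i<dd. (complex_of_real c / ?q) * (cnj (b1 i p) * z j u * (cnj (b2 i a) * b2 j a)))"
    by (rule sum.swap)
  also have "\<dots> = (\<Sum>j<dd. \<Sum>i<dd. \<Sum>a\<in>asg V'. (complex_of_real c / ?q) * (cnj (b1 i p) * z j u * (cnj (b2 i a) * b2 j a)))"
    by (rule sum.cong[OF refl], rule sum.swap)
  also have "\<dots> = (\<Sum>i<dd. \<Sum>j<dd. \<Sum>a\<in>asg V'. (complex_of_real c / ?q) * (cnj (b1 i p) * z j u * (cnj (b2 i a) * b2 j a)))"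
    by (rule sum.swap)
  also have "\<dots> = (complex_of_real c / ?q) * (\<Sum>i<dd. \<Sum>j<dd. cnj (b1 i p) * z j u * (\<Sum>a\<in>asg V'. cnj (b2 i a) * b2 j a))"
    by (simp add: sum_distrib_left)
  also have "\<dots> = (complex_of_real c / ?q) * (\<Sum>i<dd. cnj (b1 i p) * z i u)"
    by (simp add: orth2 if_distrib if_distribR sum.delta cong: if_cong)
  also have "\<dots> = (complex_of_real c / ?q) * (\<Sum>p'\<in>asg V. (\<Sum>i<dd. b1 i p' * cnj (b1 i p)) * G p' u)"
    unfolding z_def by (simp add: sum_distrib_left sum_distrib_right mult_ac sum.swap[of _ "asg V"])
  also have "\<dots> = (complex_of_real c / ?q) * G p u"
    using p fV by (simp add: complete1 if_distrib if_distribR sum.delta cong: if_cong)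
  finally show ?thesis by simp
qed

lemma Phi_hyp:
  assumes d1: "dprog V D1" and d2: "dprog V D2"
    and hyp: "\<forall>\<rho>\<in>dens W0. Re (tr W0 (mult W0 (Omega V V' b1 b2) (extE W0 V D1 \<rho>)))
                 \<le> Re (tr W0 (mult W0 (Omega V V' b1 b2) (extE W0 V D2 \<rho>)))"
  shows "Re (Phi V D1 G) \<le> Re (Phi V D2 G)"
proof -
  define z where "z = (\<lambda>i u. \<Sum>p'\<in>asg V. b1 i p' * G p' u)"
  define y0 where "y0 = (\<lambda>s. if s \<in> asg W0 then (\<Sum>j<dd. z j (restr V s) * b2 j (restr V' s)) else 0)"
  define T where "T = (\<Sum>s\<in>asg W0. (cmod (y0 s))^2)"
  have T0: "T \<ge> 0" unfolding T_def by (simp add: sum_nonneg)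
  define c where "c = 1 / sqrt (1 + T)"
  have cpos: "c > 0" unfolding c_def using T0 by simp
  have cc: "c * c = 1 / (1 + T)" unfolding c_def using T0
    by (simp add: real_sqrt_mult[symmetric] flip: real_sqrt_mult)
  define y where "y = (\<lambda>s. if s \<in> asg W0 then complex_of_real c * (\<Sum>j<dd. z j (restr V s) * b2 j (restr V' s)) else 0)"
  have yc: "y s = complex_of_real c * y0 s" for s unfolding y_def y0_def by simp
  have py: "psd W0 (outer y)" by (rule psd_outer) (simp add: y_def)
  have "tr W0 (outer y) = (\<Sum>s\<in>asg W0. complex_of_real (c * c) * complex_of_real ((cmod (y0 s))^2))"
    unfolding tr_def outer_def yc
    by (intro sum.cong refl) (simp add: nsq mult_ac)
  also have "\<dots> = complex_of_real (c * c * T)" unfolding T_def by (simp add: sum_distrib_left)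
  finally have "Re (tr W0 (outer y)) = c * c * T" by simp
  also have "\<dots> \<le> 1" unfolding cc using T0 by simp
  finally have "outer y \<in> dens W0" using py by (simp add: dens_def)
  with hyp have H: "Re (tr W0 (mult W0 (Omega V V' b1 b2) (extE W0 V D1 (outer y))))
                 \<le> Re (tr W0 (mult W0 (Omega V V' b1 b2) (extE W0 V D2 (outer y))))" by blast
  define k where "k = c / sqrt dd"
  have kpos: "k * k > 0" unfolding k_def using cpos by simp
  have gm: "Gm W0 V (omega_vec V V' b1 b2) y p u = complex_of_real k * G p u" if "p \<in> asg V" "u \<in> asg V" for p u
    unfolding y_def z_def k_def by (rule Gm_omega[OF that])
  have ev: "tr W0 (mult W0 (Omega V V' b1 b2) (extE W0 V D (outer y))) = complex_of_real (k * k) * Phi V D G"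
    if d: "dprog V D" for D
  proof -
    have "tr W0 (mult W0 (Omega V V' b1 b2) (extE W0 V D (outer y))) = Phi V D (Gm W0 V (omega_vec V V' b1 b2) y)"
      unfolding Omega_outer tr_outer by (rule qf_extE_outer[OF d fW0 VW0])
    also have "\<dots> = Phi V D (\<lambda>p u. complex_of_real k * G p u)"
      by (rule Phi_cong) (rule gm)
    also have "\<dots> = complex_of_real (k * k) * Phi V D G" by (rule Phi_scale)
    finally show ?thesis .
  qed
  have "k * k * Re (Phi V D1 G) \<le> k * k * Re (Phi V D2 G)" using H unfolding ev[OF d1] ev[OF d2] by simp
  then show ?thesis using kpos by (rule mult_left_le_imp_le)
qed

end


lemma cnonneg_iff: "(0::complex) \<le> z \<longleftrightarrow> Im z = 0 \<and> 0 \<le> Re z"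
  by (auto simp: less_eq_complex_def)

lemma tr_outer_self: "tr X (outer \<psi>) = complex_of_real (\<Sum>s\<in>asg X. (cmod (\<psi> s))^2)"
  unfolding tr_def outer_def by (simp add: nsq)

lemma qf_trunc: "qf (asg X) A (\<lambda>s. if s \<in> asg X then \<psi> s else 0) = (\<Sum>s\<in>asg X. \<Sum>t\<in>asg X. cnj (\<psi> s) * A s t * \<psi> t)"
  unfolding qf_def by (intro sum.cong refl) simp

lemma tr_minusI:
  assumes fX: "finite X" and WX: "W \<subseteq> X"
  shows "tr X (mult X (extOp X W (minus_op (idop W) N)) P) = tr X P - tr X (mult X (extOp X W N) P)"
  unfolding extOp_minus extOp_idop[OF WX] tr_mult_minus tr_idop[OF fX] ..

lemma transfer_psd:
  assumes d1: "dprog V D1" and d2: "dprog V D2" and hyp: "\<And>G. Re (Phi V D1 G) \<le> Re (Phi V D2 G)"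
    and fW: "finite W" and K: "psd W K" and fX: "finite X" and VWX: "V \<union> W \<subseteq> X" and r: "\<rho> \<in> dens X"
  shows "Re (tr X (mult X (extOp X W K) (extE X V D1 \<rho>))) \<le> Re (tr X (mult X (extOp X W K) (extE X V D2 \<rho>)))"
proof -
  have WX: "W \<subseteq> X" and VX: "V \<subseteq> X" using VWX by auto
  show ?thesis
    by (rule key_transfer[OF d1 d2 fX VX hyp psd_pform[OF psd_extOp[OF fX WX K]] psd_pform])
       (use r in \<open>simp add: dens_def\<close>)
qed

context omsetup
begin

lemma M_effect:
  assumes d: "dprog V E"
  shows "extE W0 V (adjoint V E) (Omega V V' b1 b2) \<in> effects W0"
proof -
  let ?O = "Omega V V' b1 b2"
  let ?M = "extE W0 V (adjoint V E) ?O"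
  let ?w = "omega_vec V V' b1 b2"
  have Mops: "?M \<in> ops W0" by (auto simp: ops_def extE_def)
  have IMops: "minus_op (idop W0) ?M \<in> ops W0" using Mops by (auto simp: ops_def minus_op_def idop_def)
  have key: "(\<Sum>s\<in>asg W0. \<Sum>t\<in>asg W0. cnj (\<psi> s) * ?M s t * \<psi> t) = qf (asg W0) (extE W0 V E (outer \<psi>')) ?w"
    and pP: "psd W0 (extE W0 V E (outer \<psi>'))" and po: "psd W0 (outer \<psi>')"
    if "\<psi>' = (\<lambda>s. if s \<in> asg W0 then \<psi> s else 0)" for \<psi> \<psi>'
  proof -
    show po: "psd W0 (outer \<psi>')" by (rule psd_outer) (simp add: that)
    show "psd W0 (extE W0 V E (outer \<psi>'))" by (rule dprog_cp[OF d fW0 VW0 po])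
    have "(\<Sum>s\<in>asg W0. \<Sum>t\<in>asg W0. cnj (\<psi> s) * ?M s t * \<psi> t) = tr W0 (mult W0 ?M (outer \<psi>'))"
      unfolding tr_mult_outer_right that qf_trunc ..
    also have "\<dots> = tr W0 (mult W0 ?O (extE W0 V E (outer \<psi>')))" by (rule duality[OF d fW0 VW0])
    also have "\<dots> = qf (asg W0) (extE W0 V E (outer \<psi>')) ?w" unfolding Omega_outer tr_outer ..
    finally show "(\<Sum>s\<in>asg W0. \<Sum>t\<in>asg W0. cnj (\<psi> s) * ?M s t * \<psi> t) = qf (asg W0) (extE W0 V E (outer \<psi>')) ?w" .
  qed
  have pM: "psd W0 ?M"
    unfolding psd_def
  proof (intro conjI allI Mops)
    fix \<psi> :: vec
    define \<psi>' where "\<psi>' = (\<lambda>s. if s \<in> asg W0 then \<psi> s else 0)"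
    have "0 \<le> qf (asg W0) (extE W0 V E (outer \<psi>')) ?w" using pP[OF \<psi>'_def] by (simp add: psd_def qf_def)
    then show "0 \<le> (\<Sum>s\<in>asg W0. \<Sum>t\<in>asg W0. cnj (\<psi> s) * ?M s t * \<psi> t)" using key[OF \<psi>'_def] by simp
  qed
  have pIM: "psd W0 (minus_op (idop W0) ?M)"
    unfolding psd_def
  proof (intro conjI allI IMops)
    fix \<psi> :: vec
    define \<psi>' where "\<psi>' = (\<lambda>s. if s \<in> asg W0 then \<psi> s else 0)"
    let ?P = "extE W0 V E (outer \<psi>')"
    have pP': "psd W0 ?P" using pP[OF \<psi>'_def] .
    have q0: "0 \<le> qf (asg W0) ?P ?w" using pP' by (simp add: psd_def qf_def)
    have "(\<Sum>s\<in>asg W0. \<Sum>t\<in>asg W0. cnj (\<psi> s) * minus_op (idop W0) ?M s t * \<psi> t) =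
      (\<Sum>s\<in>asg W0. \<Sum>t\<in>asg W0. cnj (\<psi> s) * idop W0 s t * \<psi> t) - (\<Sum>s\<in>asg W0. \<Sum>t\<in>asg W0. cnj (\<psi> s) * ?M s t * \<psi> t)"
      unfolding minus_op_def by (simp add: algebra_simps sum_subtractf)
    also have "(\<Sum>s\<in>asg W0. \<Sum>t\<in>asg W0. cnj (\<psi> s) * idop W0 s t * \<psi> t) = tr W0 (outer \<psi>')"
    proof -
      have "(\<Sum>s\<in>asg W0. \<Sum>t\<in>asg W0. cnj (\<psi> s) * idop W0 s t * \<psi> t) = tr W0 (mult W0 (idop W0) (outer \<psi>'))"
        unfolding tr_mult_outer_right \<psi>'_def qf_trunc ..
      then show ?thesis by (simp add: tr_idop[OF fW0])
    qed
    also note key[OF \<psi>'_def]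
    finally have eq: "(\<Sum>s\<in>asg W0. \<Sum>t\<in>asg W0. cnj (\<psi> s) * minus_op (idop W0) ?M s t * \<psi> t) =
        tr W0 (outer \<psi>') - qf (asg W0) ?P ?w" .
    have t1: "Re (tr W0 ?P) \<le> Re (tr W0 (outer \<psi>'))" by (rule tr_extE_le[OF d fW0 VW0 po[OF \<psi>'_def]])
    have "0 \<le> tr W0 (mult W0 (minus_op (idop W0) ?O) ?P)" by (rule tr_psd_nonneg[OF fW0 psd_IOmega pP'])
    also have "tr W0 (mult W0 (minus_op (idop W0) ?O) ?P) = tr W0 ?P - qf (asg W0) ?P ?w"
      unfolding tr_mult_minus tr_idop[OF fW0] Omega_outer tr_outer ..
    finally have t2: "Re (qf (asg W0) ?P ?w) \<le> Re (tr W0 ?P)" by (simp add: cnonneg_iff)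
    have im: "Im (tr W0 (outer \<psi>')) = 0" unfolding tr_outer_self by simp
    show "0 \<le> (\<Sum>s\<in>asg W0. \<Sum>t\<in>asg W0. cnj (\<psi> s) * minus_op (idop W0) ?M s t * \<psi> t)"
      unfolding eq using t1 t2 im q0 by (simp add: cnonneg_iff)
  qed
  show ?thesis using pM pIM by (simp add: effects_def)
qed

lemma Omega_effect: "Omega V V' b1 b2 \<in> effects W0"
  using psd_Omega psd_IOmega by (simp add: effects_def)

definition gD :: "(op \<Rightarrow> op) \<Rightarrow> nat set \<Rightarrow> op \<Rightarrow> complex" where
  "gD D X \<rho> = tr X (mult X (extOp X W0 (Omega V V' b1 b2)) (extE X V D \<rho>))"

lemma tot_iff:
  assumes dE: "dprog V E"
  shows "sat_tot V D W0 (extE W0 V (adjoint V E) (Omega V V' b1 b2)) (Omega V V' b1 b2) \<longleftrightarrow>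
    (\<forall>X. finite X \<and> V \<union> W0 \<subseteq> X \<longrightarrow> (\<forall>\<rho>\<in>dens X. Re (gD E X \<rho>) \<le> Re (gD D X \<rho>)))"
proof -
  have "tr X (mult X (extOp X W0 (extE W0 V (adjoint V E) (Omega V V' b1 b2))) \<rho>) = gD E X \<rho>"
    if "finite X" "V \<union> W0 \<subseteq> X" for X \<rho>
    unfolding gD_def by (rule CI[OF dE that(1) VW0]) (use that in auto)
  then show ?thesis unfolding sat_tot_def gD_def by simp
qed

lemma par_iff:
  assumes dE: "dprog V E"
  shows "sat_par V D W0 (minus_op (idop W0) (extE W0 V (adjoint V E) (Omega V V' b1 b2))) (minus_op (idop W0) (Omega V V' b1 b2)) \<longleftrightarrow>
    (\<forall>X. finite X \<and> V \<union> W0 \<subseteq> X \<longrightarrow> (\<forall>\<rho>\<in>dens X. Re (gD D X \<rho>) \<le> Re (gD E X \<rho>)))"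
proof -
  have e1: "tr X (mult X (extOp X W0 (minus_op (idop W0) (extE W0 V (adjoint V E) (Omega V V' b1 b2)))) \<rho>) = tr X \<rho> - gD E X \<rho>"
    if "finite X" "V \<union> W0 \<subseteq> X" for X \<rho>
  proof -
    have WX: "W0 \<subseteq> X" using that by auto
    show ?thesis unfolding tr_minusI[OF that(1) WX] gD_def CI[OF dE that(1) VW0 WX] ..
  qed
  have e2: "tr X (mult X (extOp X W0 (minus_op (idop W0) (Omega V V' b1 b2))) (extE X V D \<rho>)) = tr X (extE X V D \<rho>) - gD D X \<rho>"
    if "finite X" "V \<union> W0 \<subseteq> X" for X \<rho>
  proof -
    have WX: "W0 \<subseteq> X" using that by auto
    show ?thesis unfolding tr_minusI[OF that(1) WX] gD_def ..
  qed
  show ?thesis unfolding sat_par_def using e1 e2 by auto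
qed

lemma gD_W0: "gD D W0 \<rho> = tr W0 (mult W0 (Omega V V' b1 b2) (extE W0 V D \<rho>))"
  unfolding gD_def using psd_Omega by (simp add: psd_def extOp_self)

lemma main:
  assumes dE: "dprog V E" and dF: "dprog V F"
  shows "(leT V E F \<longleftrightarrow>
            sat_tot V F (V \<union> V') (extE (V \<union> V') V (adjoint V E) (Omega V V' b1 b2))
                       (Omega V V' b1 b2))
       \<and> (leP V E F \<longleftrightarrow>
            sat_par V F (V \<union> V')
              (minus_op (idop (V \<union> V')) (extE (V \<union> V') V (adjoint V E) (Omega V V' b1 b2)))
              (minus_op (idop (V \<union> V')) (Omega V V' b1 b2)))"
proof (intro conjI iffI)
  let ?O = "Omega V V' b1 b2"
  let ?M = "extE W0 V (adjoint V E) ?O"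
  have fin: "finite W0" by (rule fW0)
  have hW0: "finite W0 \<and> V \<union> W0 \<subseteq> W0" using fin by simp
  {
    assume l: "leT V E F"
    have "sat_tot V E W0 ?M ?O" unfolding tot_iff[OF dE] by simp
    moreover have "finite W0 \<and> ?M \<in> effects W0 \<and> ?O \<in> effects W0"
      using M_effect[OF dE] Omega_effect fin by simp
    ultimately show "sat_tot V F W0 ?M ?O"
      using l[unfolded leT_def, rule_format, of W0 ?M ?O] by simp
  }
  {
    assume s: "sat_tot V F W0 ?M ?O"
    have h: "Re (Phi V E G) \<le> Re (Phi V F G)" for G
    proof (rule Phi_hyp[OF dE dF])
      show "\<forall>\<rho>\<in>dens W0. Re (tr W0 (mult W0 ?O (extE W0 V E \<rho>))) \<le> Re (tr W0 (mult W0 ?O (extE W0 V F \<rho>)))"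
        using s[unfolded tot_iff[OF dE], rule_format, OF hW0] unfolding gD_W0 by blast
    qed
    show "leT V E F" unfolding leT_def
    proof (intro allI impI)
      fix W M' N
      assume WMN: "finite W \<and> M' \<in> effects W \<and> N \<in> effects W" and sE: "sat_tot V E W M' N"
      have pN: "psd W N" using WMN by (simp add: effects_def)
      show "sat_tot V F W M' N" unfolding sat_tot_def
      proof (intro allI impI ballI)
        fix X \<rho> assume X: "finite X \<and> V \<union> W \<subseteq> X" and r: "\<rho> \<in> dens X"
        have "Re (tr X (mult X (extOp X W M') \<rho>)) \<le> Re (tr X (mult X (extOp X W N) (extE X V E \<rho>)))"
          using sE[unfolded sat_tot_def, rule_format, OF X r] .
        also have "\<dots> \<le> Re (tr X (mult X (extOp X W N) (extE X V F \<rho>)))"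
          using transfer_psd[OF dE dF h _ pN _ _ r] WMN X by simp
        finally show "Re (tr X (mult X (extOp X W M') \<rho>)) \<le> Re (tr X (mult X (extOp X W N) (extE X V F \<rho>)))" .
      qed
    qed
  }
  {
    assume l: "leP V E F"
    have "sat_par V E W0 (minus_op (idop W0) ?M) (minus_op (idop W0) ?O)" unfolding par_iff[OF dE] by simp
    moreover have "finite W0 \<and> minus_op (idop W0) ?M \<in> effects W0 \<and> minus_op (idop W0) ?O \<in> effects W0"
      using effects_compl[OF M_effect[OF dE]] effects_compl[OF Omega_effect] fin by simp
    ultimately show "sat_par V F W0 (minus_op (idop W0) ?M) (minus_op (idop W0) ?O)"
      using l[unfolded leP_def, rule_format, of W0 "minus_op (idop W0) ?M" "minus_op (idop W0) ?O"] by simp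
  }
  {
    assume s: "sat_par V F W0 (minus_op (idop W0) ?M) (minus_op (idop W0) ?O)"
    have h: "Re (Phi V F G) \<le> Re (Phi V E G)" for G
    proof (rule Phi_hyp[OF dF dE])
      show "\<forall>\<rho>\<in>dens W0. Re (tr W0 (mult W0 ?O (extE W0 V F \<rho>))) \<le> Re (tr W0 (mult W0 ?O (extE W0 V E \<rho>)))"
        using s[unfolded par_iff[OF dE], rule_format, OF hW0] unfolding gD_W0 by blast
    qed
    show "leP V E F" unfolding leP_def
    proof (intro allI impI)
      fix W M' N
      assume WMN: "finite W \<and> M' \<in> effects W \<and> N \<in> effects W" and sE: "sat_par V E W M' N"
      have pK: "psd W (minus_op (idop W) N)" using WMN by (simp add: effects_def)
      show "sat_par V F W M' N" unfolding sat_par_def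
      proof (intro allI impI ballI)
        fix X \<rho> assume X: "finite X \<and> V \<union> W \<subseteq> X" and r: "\<rho> \<in> dens X"
        have WX: "W \<subseteq> X" using X by auto
        have a: "Re (tr X (mult X (extOp X W M') \<rho>)) \<le> Re (tr X (mult X (extOp X W N) (extE X V E \<rho>)))
           + Re (tr X \<rho>) - Re (tr X (extE X V E \<rho>))"
          using sE[unfolded sat_par_def, rule_format, OF X r] .
        have b: "Re (tr X (mult X (extOp X W (minus_op (idop W) N)) (extE X V F \<rho>))) \<le>
                 Re (tr X (mult X (extOp X W (minus_op (idop W) N)) (extE X V E \<rho>)))"
          using transfer_psd[OF dF dE h _ pK _ _ r] WMN X by simp
        show "Re (tr X (mult X (extOp X W M') \<rho>)) \<le> Re (tr X (mult X (extOp X W N) (extE X V F \<rho>)))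
           + Re (tr X \<rho>) - Re (tr X (extE X V F \<rho>))"
          using a b unfolding tr_minusI[OF conjunct1[OF X] WX] by simp
      qed
    qed
  }
qed

end

theorem theorem4p3:
  fixes V V' :: "nat set" and E F :: "op \<Rightarrow> op" and b1 b2 :: "nat \<Rightarrow> vec"
  assumes "finite V" and "dprog V E" and "dprog V F"
    and "card V' = card V" and "finite V'" and "V \<inter> V' = {}"
    and "onb V b1" and "onb V' b2"
  shows "(leT V E F \<longleftrightarrow>
            sat_tot V F (V \<union> V') (extE (V \<union> V') V (adjoint V E) (Omega V V' b1 b2))
                       (Omega V V' b1 b2))
       \<and> (leP V E F \<longleftrightarrow>
            sat_par V F (V \<union> V')
              (minus_op (idop (V \<union> V')) (extE (V \<union> V') V (adjoint V E) (Omega V V' b1 b2)))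
              (minus_op (idop (V \<union> V')) (Omega V V' b1 b2)))"
proof -
  interpret omsetup V V' b1 b2
    using assms by (unfold_locales) auto
  show ?thesis by (rule main[OF assms(2,3)])
qed


end
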